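(* Let $J^\star=\min_{s\in\mathcal S}J(s;w^\star,c^\star)$ and let $s^\star$ be any search attaining this minimum. Let $\pi^\star$ be the stationary policy that selects $s^\star$ at every round. Then for every budget $B>0$, $$\frac{B-n}{J^\star}\le F_B(\pi^\star)\le F_B^\star\le \frac{B+n}{J^\star}.$$
   Context: $\mathcal G=([n],\mathcal E)$ is a finite directed acyclic graph on $[n]=\{1,\dots,n\}$. A search is a tuple $s=(s_1,\dots,s_k)$ of distinct vertices ($0\le k\le n$) such that every in-neighbor of each $s_i$ belongs to $\{s_1,\dots,s_{i-1}\}$; $\mathcal S$ denotes the set of searches. For $w\in[0,\infty)^n$, $c\in(0,\infty)^n$ and a search $s$, $J(s;w,c)=\big(\sum_{i=1}^{|s|}c_{s_i}(1-\sum_{j<i}w_{s_j})\big)/\big(\sum_{i=1}^{|s|}w_{s_i}\big)$ if the denominator is positive, and $J(s;w,c)=+\infty$ otherwise (in particular for the empty search). Sequential search-and-stop setting: random costs $C=(C_1,\dots,C_n)\in[0,1]^n$ with mutually independent components and means $c^\star=\mathbb E[C]\in(0,1]^n$; a hider vector $W\in\{0,1\}^n$ that is one-hot, with $\mathbb P(W_i=1)=w^\star_i$, where $w^\star\in[0,1]^n$, $\sum_i w^\star_i=1$, and $W$ independent of $C$. At each round $t=1,2,\dots$ an independent copy $(C_t,W_t)$ is drawn. A policy selects at the beginning of round $t$ a search $s_t$ (possibly randomly, as a function of past observations) and performs $s_t[W_t]$, where $s[W]$ is the prefix of $s$ ending at the unique arm $i\in s$ with $W_i=1$ if such an arm is in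 $s$, and $s[W]=s$ otherwise; it pays $\sum_{i\in s_t[W_t]}C_{i,t}$ and observes $W_{i,t}$ for $i\in s_t$ and $C_{i,t}$ for $i\in s_t[W_t]$. With budget $B>0$, let $B_t=B-\sum_{u=1}^t\sum_{i\in s_u[W_u]}C_{i,u}$ and $\tau_B$ the first $t$ with $B_t<0$. The expected reward is $F_B(\pi)=\mathbb E\big[\sum_{t=1}^{\tau_B-1}\sum_{i\in s_t[W_t]}W_{i,t}\big]$ and $F_B^\star$ is the supremum of $F_B(\pi)$ over all such policies, which may use full knowledge of the distribution of $(C,W)$ and of $B$. *)

theory Defs
  imports "HOL-Probability.Probability"
begin

definition searches :: "nat \<Rightarrow> (nat \<times> nat) set \<Rightarrow> nat list set" where
  "searches n E = {s. distinct s \<and> set s \<subseteq> {1..n} \<and>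
      (\<forall>k<length s. \<forall>j. (j, s ! k) \<in> E \<longrightarrow> j \<in> set (take k s))}"

definition Jfun :: "nat list \<Rightarrow> (nat \<Rightarrow> real) \<Rightarrow> (nat \<Rightarrow> real) \<Rightarrow> ereal" where
  "Jfun s w c =
     (let D = (\<Sum>i<length s. w (s ! i)) in
      if D > 0 then
        ereal ((\<Sum>i<length s. c (s ! i) * (1 - (\<Sum>j<i. w (s ! j)))) / D)
      else \<infinity>)"

definition Jstar :: "nat \<Rightarrow> (nat \<times> nat) set \<Rightarrow> (nat \<Rightarrow> real) \<Rightarrow> (nat \<Rightarrow> real) \<Rightarrow> ereal" where
  "Jstar n E w c = Min ((\<lambda>s. Jfun s w c) ` searches n E)"

definition hider_vec :: "nat \<Rightarrow> nat \<Rightarrow> real" where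
  "hider_vec h = (\<lambda>i. if i = h then 1 else 0)"

definition sprefix :: "nat list \<Rightarrow> (nat \<Rightarrow> real) \<Rightarrow> nat list" where
  "sprefix s W =
     (if \<exists>i\<in>set s. W i = 1
      then take (Suc (LEAST k. k < length s \<and> W (s ! k) = 1)) s
      else s)"

text \<open>One round's randomness: cost vector C, hider index (W = hider_vec h),
  and an independent uniform seed available to the policy.\<close>
type_synonym round = "(nat \<Rightarrow> real) \<times> nat \<times> real"

text \<open>Observation of a round: the search performed, W_i for i in s (0 elsewhere),
  C_i for i in s[W] (0 elsewhere).\<close>
type_synonym obs = "nat list \<times> (nat \<Rightarrow> real) \<times> (nat \<Rightarrow> real)"

text \<open>A policy maps past observations and the seeds revealed so far to a search.\<close>
type_synonym policy = "obs list \<Rightarrow> real list \<Rightarrow> nat list"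

definition observe :: "nat list \<Rightarrow> round \<Rightarrow> obs" where
  "observe s r = (case r of (c, h, u) \<Rightarrow>
     (s, \<lambda>i. if i \<in> set s then hider_vec h i else 0,
         \<lambda>i. if i \<in> set (sprefix s (hider_vec h)) then c i else 0))"

definition seeds :: "(nat \<Rightarrow> round) \<Rightarrow> nat \<Rightarrow> real list" where
  "seeds \<omega> t = map (\<lambda>u. snd (snd (\<omega> u))) [0..<Suc t]"

primrec obs_hist :: "policy \<Rightarrow> (nat \<Rightarrow> round) \<Rightarrow> nat \<Rightarrow> obs list" where
  "obs_hist \<pi> \<omega> 0 = []"
| "obs_hist \<pi> \<omega> (Suc t) =
     obs_hist \<pi> \<omega> t @ [observe (\<pi> (obs_hist \<pi> \<omega> t) (seeds \<omega> t)) (\<omega> t)]"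

text \<open>The search chosen at round t (rounds are numbered from 0).\<close>
definition choice :: "policy \<Rightarrow> (nat \<Rightarrow> round) \<Rightarrow> nat \<Rightarrow> nat list" where
  "choice \<pi> \<omega> t = \<pi> (obs_hist \<pi> \<omega> t) (seeds \<omega> t)"

definition round_cost :: "policy \<Rightarrow> (nat \<Rightarrow> round) \<Rightarrow> nat \<Rightarrow> real" where
  "round_cost \<pi> \<omega> t = (case \<omega> t of (c, h, u) \<Rightarrow>
     sum_list (map c (sprefix (choice \<pi> \<omega> t) (hider_vec h))))"

definition round_reward :: "policy \<Rightarrow> (nat \<Rightarrow> round) \<Rightarrow> nat \<Rightarrow> real" where
  "round_reward \<pi> \<omega> t = (case \<omega> t of (c, h, u) \<Rightarrow>
     sum_list (map (hider_vec h) (sprefix (choice \<pi> \<omega> t) (hider_vec h))))"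

definition budget_left :: "real \<Rightarrow> policy \<Rightarrow> (nat \<Rightarrow> round) \<Rightarrow> nat \<Rightarrow> real" where
  "budget_left B \<pi> \<omega> t = B - (\<Sum>u\<le>t. round_cost \<pi> \<omega> u)"

text \<open>tau_B (0-based): first round t with B_t < 0; infinity if none.\<close>
definition stop_time :: "real \<Rightarrow> policy \<Rightarrow> (nat \<Rightarrow> round) \<Rightarrow> enat" where
  "stop_time B \<pi> \<omega> =
     (if \<exists>t. budget_left B \<pi> \<omega> t < 0
      then enat (LEAST t. budget_left B \<pi> \<omega> t < 0) else \<infinity>)"

definition reward_expected :: "(nat \<Rightarrow> round) measure \<Rightarrow> real \<Rightarrow> policy \<Rightarrow> ennreal" where
  "reward_expected M B \<pi> =
     (\<integral>\<^sup>+ \<omega>. (\<Sum>t. if enat t < stop_time B \<pi> \<omega> then ennreal (round_reward \<pi> \<omega> t) else 0) \<partial>M)"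

definition round_measure :: "nat \<Rightarrow> (nat \<Rightarrow> real measure) \<Rightarrow> nat pmf \<Rightarrow> round measure" where
  "round_measure n \<mu> H =
     (PiM {1..n} \<mu>) \<Otimes>\<^sub>M (measure_pmf H \<Otimes>\<^sub>M uniform_measure lborel {0..1::real})"

definition omega_measure :: "nat \<Rightarrow> (nat \<Rightarrow> real measure) \<Rightarrow> nat pmf \<Rightarrow> (nat \<Rightarrow> round) measure" where
  "omega_measure n \<mu> H = PiM UNIV (\<lambda>_::nat. round_measure n \<mu> H)"

definition valid_policy :: "nat \<Rightarrow> (nat \<times> nat) set \<Rightarrow> (nat \<Rightarrow> round) measure \<Rightarrow> policy \<Rightarrow> bool" where
  "valid_policy n E M \<pi> \<longleftrightarrow>
     (\<forall>\<omega>\<in>space M. \<forall>t. choice \<pi> \<omega> t \<in> searches n E) \<and>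
     (\<forall>t. (\<lambda>\<omega>. choice \<pi> \<omega> t) \<in> measurable M (count_space UNIV))"

definition opt_reward :: "nat \<Rightarrow> (nat \<times> nat) set \<Rightarrow> (nat \<Rightarrow> round) measure \<Rightarrow> real \<Rightarrow> ennreal" where
  "opt_reward n E M B = (SUP \<pi> \<in> {\<pi>. valid_policy n E M \<pi>}. reward_expected M B \<pi>)"

end

theory Submission
  imports Defs
begin

definition Dw :: "nat list \<Rightarrow> (nat \<Rightarrow> real) \<Rightarrow> real" where
  "Dw s w = (\<Sum>i<length s. w (s ! i))"
definition Nm :: "nat list \<Rightarrow> (nat \<Rightarrow> real) \<Rightarrow> (nat \<Rightarrow> real) \<Rightarrow> real" where
  "Nm s w c = (\<Sum>i<length s. c (s ! i) * (1 - (\<Sum>j<i. w (s ! j))))"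

lemma Jfun_alt: "Jfun s w c = (if Dw s w > 0 then ereal (Nm s w c / Dw s w) else \<infinity>)"
  by (simp add: Jfun_def Dw_def Nm_def Let_def)

lemma searches_finite: "finite (searches n E)"
proof (rule finite_subset)
  show "searches n E \<subseteq> {xs. set xs \<subseteq> {1..n} \<and> length xs \<le> n}"
  proof
    fix s assume "s \<in> searches n E"
    then have d: "distinct s" and ss: "set s \<subseteq> {1..n}" by (auto simp: searches_def)
    have "length s = card (set s)" using d by (simp add: distinct_card)
    also have "\<dots> \<le> card {1..n}" using ss by (intro card_mono) auto
    finally show "s \<in> {xs. set xs \<subseteq> {1..n} \<and> length xs \<le> n}" using ss by auto
  qed
  show "finite {xs. set xs \<subseteq> {1..n} \<and> length xs \<le> n}"
    by (rule finite_lists_length_le) auto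
qed

lemma searchesD: assumes "s \<in> searches n E" shows "distinct s" "set s \<subseteq> {1..n}"
  using assms unfolding searches_def by blast+

lemma searches_nth: "s \<in> searches n E \<Longrightarrow> i < length s \<Longrightarrow> s ! i \<in> {1..n}"
  using searchesD(2) nth_mem by (metis subsetD)

lemma searches_Nil: "[] \<in> searches n E"
  by (simp add: searches_def)

lemma searches_snoc:
  assumes "s \<in> searches n E" "v \<in> {1..n}" "v \<notin> set s" "\<And>y. (y, v) \<in> E \<Longrightarrow> y \<in> set s"
  shows "s @ [v] \<in> searches n E"
  unfolding searches_def
proof (intro CollectI conjI allI impI)
  show "distinct (s @ [v])" "set (s @ [v]) \<subseteq> {1..n}" using assms by (auto simp: searches_def)
  fix k j assume k: "k < length (s @ [v])" and e: "(j, (s @ [v]) ! k) \<in> E"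
  show "j \<in> set (take k (s @ [v]))"
  proof (cases "k < length s")
    case True
    then show ?thesis using assms(1) e by (auto simp: searches_def nth_append)
  next
    case False
    then have "k = length s" using k by simp
    then show ?thesis using e assms(4) by simp
  qed
qed

lemma topo_exists:
  assumes E: "E \<subseteq> {1..n} \<times> {1..n}" and ac: "acyclic E"
  shows "\<exists>s\<in>searches n E. set s = {1..n}"
proof -
  have wfE: "wf E"
    using E ac by (intro finite_acyclic_wf) (auto intro: finite_subset)
  have "\<forall>s\<in>searches n E. length s = m \<longrightarrow> (\<exists>s'\<in>searches n E. set s' = {1..n})" if "m \<le> n" for m
    using that
  proof (induction "n - m" arbitrary: m rule: less_induct)
    case less
    show ?case
    proof (intro ballI impI)
      fix s assume s: "s \<in> searches n E" and len: "length s = m"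
      show "\<exists>s'\<in>searches n E. set s' = {1..n}"
      proof (cases "set s = {1..n}")
        case True then show ?thesis using s by blast
      next
        case False
        let ?R = "{1..n} - set s"
        have ss: "set s \<subseteq> {1..n}" and d: "distinct s" using s by (auto simp: searches_def)
        have "?R \<noteq> {}" using False ss by auto
        then obtain v where v: "v \<in> ?R" and vmin: "\<And>y. (y, v) \<in> E \<Longrightarrow> y \<notin> ?R"
          using wfE unfolding wf_eq_minimal by (metis ex_in_conv)
        have s2: "s @ [v] \<in> searches n E"
          using v vmin E by (intro searches_snoc[OF s]) auto
        have "length s = card (set s)" using d by (simp add: distinct_card)
        moreover have "card (set s) < card {1..n}" using ss False by (intro psubset_card_mono) auto
        ultimately have "m < n" using len by simp
        then show ?thesis
        proof -
          have "n - Suc m < n - m" "Suc m \<le> n" using \<open>m < n\<close> by auto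
          from less.hyps[OF this] have "\<forall>s\<in>searches n E. length s = Suc m \<longrightarrow> (\<exists>s'\<in>searches n E. set s' = {1..n})" .
          then show ?thesis using s2 len by (metis length_append_singleton)
        qed
      qed
    qed
  qed
  then show ?thesis using searches_Nil by fastforce
qed

lemma sum_nth_take:
  assumes "distinct s" "k \<le> length s"
  shows "(\<Sum>j<k. w (s ! j)) = sum w (set (take k s))"
  using assms(2)
proof (induction k)
  case 0
  then show ?case by simp
next
  case (Suc k)
  have k: "k < length s" using Suc.prems by simp
  have tk: "take (Suc k) s = take k s @ [s ! k]" using k by (rule take_Suc_conv_app_nth)
  have nin: "s ! k \<notin> set (take k s)"
  proof
    assume "s ! k \<in> set (take k s)"
    then obtain j where j: "j < k" "take k s ! j = s ! k" by (auto simp: in_set_conv_nth)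
    then have "s ! j = s ! k" by simp
    then have "j = k" using assms(1) j(1) k by (simp add: nth_eq_iff_index_eq)
    then show False using j by simp
  qed
  have "(\<Sum>j<Suc k. w (s ! j)) = (\<Sum>j<k. w (s ! j)) + w (s ! k)" by simp
  also have "\<dots> = sum w (set (take k s)) + w (s ! k)" using Suc k by simp
  also have "\<dots> = sum w (set (take (Suc k) s))" unfolding tk using nin by (simp add: add.commute)
  finally show ?case .
qed

locale setting =
  fixes n :: nat and E :: "(nat \<times> nat) set"
    and wstar cstar :: "nat \<Rightarrow> real" and \<mu> :: "nat \<Rightarrow> real measure" and H :: "nat pmf"
    and B :: real and sstar :: "nat list"
  assumes E: "E \<subseteq> {1..n} \<times> {1..n}" and acE: "acyclic E"
    and w01: "\<forall>i\<in>{1..n}. 0 \<le> wstar i \<and> wstar i \<le> 1" and wsum: "(\<Sum>i\<in>{1..n}. wstar i) = 1"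
    and Hw: "\<forall>i\<in>{1..n}. pmf H i = wstar i"
    and mu: "\<forall>i\<in>{1..n}. prob_space (\<mu> i) \<and> sets (\<mu> i) = sets borel \<and>
           emeasure (\<mu> i) {0..1} = 1 \<and> (\<integral>x. x \<partial>(\<mu> i)) = cstar i"
    and c01: "\<forall>i\<in>{1..n}. 0 < cstar i \<and> cstar i \<le> 1"
    and sstar: "sstar \<in> searches n E" and sstar_opt: "Jfun sstar wstar cstar = Jstar n E wstar cstar"
    and Bpos: "B > 0"
begin

definition "J = real_of_ereal (Jstar n E wstar cstar)"

lemma cpos: "i \<in> {1..n} \<Longrightarrow> 0 < cstar i" and cle1: "i \<in> {1..n} \<Longrightarrow> cstar i \<le> 1"
  and wnn: "i \<in> {1..n} \<Longrightarrow> 0 \<le> wstar i"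
  using c01 w01 by blast+

lemma prefix_w:
  assumes "s \<in> searches n E" "k \<le> length s"
  shows "0 \<le> (\<Sum>j<k. wstar (s ! j))" "(\<Sum>j<k. wstar (s ! j)) \<le> 1"
proof -
  have d: "distinct s" and ss: "set s \<subseteq> {1..n}" using searchesD[OF assms(1)] by auto
  have st: "set (take k s) \<subseteq> {1..n}" by (rule order_trans[OF set_take_subset ss])
  have eq: "(\<Sum>j<k. wstar (s ! j)) = sum wstar (set (take k s))"
    using sum_nth_take[OF d assms(2)] .
  show "0 \<le> (\<Sum>j<k. wstar (s ! j))" unfolding eq
    by (intro sum_nonneg) (metis st subsetD wnn)
  have "sum wstar (set (take k s)) \<le> sum wstar {1..n}"
    by (rule sum_mono2) (use st wnn in auto)
  then show "(\<Sum>j<k. wstar (s ! j)) \<le> 1" unfolding eq wsum .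
qed

lemma Dw_nonneg: "s \<in> searches n E \<Longrightarrow> 0 \<le> Dw s wstar"
  using prefix_w(1)[of s "length s"] by (simp add: Dw_def)

lemma Nm_nonneg: assumes "s \<in> searches n E" shows "0 \<le> Nm s wstar cstar"
  unfolding Nm_def
proof (intro sum_nonneg)
  fix i assume i: "i \<in> {..<length s}"
  have "s ! i \<in> {1..n}" using assms i searches_nth by auto
  then have "0 \<le> cstar (s ! i)" using cpos less_imp_le by blast
  moreover have "0 \<le> 1 - (\<Sum>j<i. wstar (s ! j))" using prefix_w(2)[OF assms, of i] i by simp
  ultimately show "0 \<le> cstar (s ! i) * (1 - (\<Sum>j<i. wstar (s ! j)))" by simp
qed

lemma Nm_le: assumes "s \<in> searches n E" shows "Nm s wstar cstar \<le> real n"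
proof -
  have "Nm s wstar cstar \<le> (\<Sum>i<length s. 1)"
    unfolding Nm_def
  proof (intro sum_mono)
    fix i assume i: "i \<in> {..<length s}"
    have "s ! i \<in> {1..n}" using assms i searches_nth by auto
    then have "0 \<le> cstar (s ! i)" "cstar (s ! i) \<le> 1" using cpos cle1 less_imp_le by blast+
    moreover have "0 \<le> 1 - (\<Sum>j<i. wstar (s ! j))" "1 - (\<Sum>j<i. wstar (s ! j)) \<le> 1"
      using prefix_w[OF assms, of i] i by auto
    ultimately show "cstar (s ! i) * (1 - (\<Sum>j<i. wstar (s ! j))) \<le> 1"
      by (metis mult_le_one)
  qed
  also have "\<dots> = real (length s)" by simp
  also have "length s \<le> n"
  proof -
    have d: "distinct s" and ss: "set s \<subseteq> {1..n}" using searchesD[OF assms(1)] by auto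
    have "length s = card (set s)" using d by (simp add: distinct_card)
    also have "\<dots> \<le> card {1..n}" using ss by (intro card_mono) auto
    finally show ?thesis by simp
  qed
  finally show ?thesis by simp
qed

lemma Jstar_le: "s \<in> searches n E \<Longrightarrow> Jstar n E wstar cstar \<le> Jfun s wstar cstar"
  unfolding Jstar_def using searches_finite by (intro Min_le) auto

lemma facts:
  "0 < Dw sstar wstar" "J = Nm sstar wstar cstar / Dw sstar wstar" "0 < J" "J \<le> real n"
proof -
  obtain s0 where s0: "s0 \<in> searches n E" "set s0 = {1..n}" using topo_exists[OF E acE] by blast
  have d0: "distinct s0" using s0(1) unfolding searches_def by blast
  have "Dw s0 wstar = sum wstar (set (take (length s0) s0))"
    unfolding Dw_def by (rule sum_nth_take[OF d0 order_refl])
  also have "\<dots> = 1" using s0(2) wsum by simp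
  finally have "Dw s0 wstar = 1" .
  then have J0: "Jfun s0 wstar cstar = ereal (Nm s0 wstar cstar)" by (simp add: Jfun_alt)
  have le0: "Jfun sstar wstar cstar \<le> ereal (Nm s0 wstar cstar)"
    using Jstar_le[OF s0(1)] J0 sstar_opt by simp
  show Dpos: "0 < Dw sstar wstar"
    using le0 by (auto simp: Jfun_alt split: if_splits)
  then show Jeq: "J = Nm sstar wstar cstar / Dw sstar wstar"
    unfolding J_def sstar_opt[symmetric] by (simp add: Jfun_alt)
  have "J \<le> Nm s0 wstar cstar" using le0 Dpos unfolding Jeq by (simp add: Jfun_alt)
  also have "\<dots> \<le> real n" using Nm_le[OF s0(1)] .
  finally show "J \<le> real n" .
  have ne: "sstar \<noteq> []" using Dpos by (auto simp: Dw_def)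
  have "0 < Nm sstar wstar cstar"
  proof -
    have "Nm sstar wstar cstar = (\<Sum>i\<in>insert 0 {1..<length sstar}. cstar (sstar ! i) * (1 - (\<Sum>j<i. wstar (sstar ! j))))"
    proof -
      have "{..<length sstar} = insert 0 {1..<length sstar}" using ne by (auto simp: lessThan_atLeast0)
      then show ?thesis unfolding Nm_def by simp
    qed
    also have "\<dots> = cstar (sstar ! 0) + (\<Sum>i\<in>{1..<length sstar}. cstar (sstar ! i) * (1 - (\<Sum>j<i. wstar (sstar ! j))))"
      by (subst sum.insert) auto
    also have "\<dots> > 0"
    proof (rule add_pos_nonneg)
      have "sstar ! 0 \<in> {1..n}" using sstar ne searches_nth by auto
      then show "0 < cstar (sstar ! 0)" using cpos by blast
      show "0 \<le> (\<Sum>i\<in>{1..<length sstar}. cstar (sstar ! i) * (1 - (\<Sum>j<i. wstar (sstar ! j))))"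
      proof (intro sum_nonneg)
        fix i assume i: "i \<in> {1..<length sstar}"
        have "sstar ! i \<in> {1..n}" using sstar i searches_nth by auto
        then have "0 \<le> cstar (sstar ! i)" using cpos less_imp_le by blast
        moreover have "0 \<le> 1 - (\<Sum>j<i. wstar (sstar ! j))" using prefix_w(2)[OF sstar, of i] i by simp
        ultimately show "0 \<le> cstar (sstar ! i) * (1 - (\<Sum>j<i. wstar (sstar ! j)))" by simp
      qed
    qed
    finally show ?thesis .
  qed
  then show "0 < J" using Jeq Dpos by simp
qed

lemma J_le_ratio: assumes "s \<in> searches n E" shows "J * Dw s wstar \<le> Nm s wstar cstar"
proof (cases "Dw s wstar > 0")
  case True
  have "ereal J \<le> Jfun s wstar cstar"
    using Jstar_le[OF assms] facts sstar_opt unfolding J_def by (simp add: Jfun_alt)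
  then have "J \<le> Nm s wstar cstar / Dw s wstar" using True by (simp add: Jfun_alt)
  then show ?thesis using True by (simp add: field_simps)
next
  case False
  then have "Dw s wstar = 0" using Dw_nonneg[OF assms] by simp
  then show ?thesis using Nm_nonneg[OF assms] by simp
qed

end


lemma gcomp:
  assumes gm: "\<And>s. (\<lambda>(c,h). g s c h) \<in> borel_measurable (C \<Otimes>\<^sub>M Hm)"
    and f: "f \<in> measurable N C" and k: "k \<in> measurable N Hm"
    and b: "(\<beta> :: _ \<Rightarrow> 'l::countable) \<in> measurable N (count_space UNIV)"
  shows "(\<lambda>x. g (\<beta> x) (f x) (k x) :: ennreal) \<in> borel_measurable N"
proof (rule measurable_compose_countable[where f="\<lambda>s x. g s (f x) (k x)", OF _ b])
  fix s
  have "(\<lambda>x. (f x, k x)) \<in> measurable N (C \<Otimes>\<^sub>M Hm)" using f k by (rule measurable_Pair)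
  from measurable_compose[OF this gm[of s]] show "(\<lambda>x. g s (f x) (k x)) \<in> borel_measurable N" by simp
qed

lemma R_lemma:
  fixes C :: "(nat \<Rightarrow> real) measure" and Hm :: "nat measure" and U :: "real measure"
    and \<psi> :: "(nat \<Rightarrow> real) \<times> nat \<times> real \<Rightarrow> ennreal" and \<tau> :: "(nat \<Rightarrow> real) \<times> nat \<times> real \<Rightarrow> nat list"
    and g :: "nat list \<Rightarrow> (nat \<Rightarrow> real) \<Rightarrow> nat \<Rightarrow> ennreal"
  assumes pC: "prob_space C" and pH: "prob_space Hm" and pU: "prob_space U"
    and \<psi>m: "\<psi> \<in> borel_measurable (C \<Otimes>\<^sub>M (Hm \<Otimes>\<^sub>M U))"
    and \<tau>m: "\<tau> \<in> measurable (C \<Otimes>\<^sub>M (Hm \<Otimes>\<^sub>M U)) (count_space UNIV)"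
    and gm: "\<And>s. (\<lambda>(c,h). g s c h) \<in> borel_measurable (C \<Otimes>\<^sub>M Hm)"
    and inv1: "\<And>c h c' h' u. \<psi> (c,h,u) = \<psi> (c',h',u)"
    and inv2: "\<And>c h c' h' u. \<tau> (c,h,u) = \<tau> (c',h',u)"
    and c0: "c0 \<in> space C" and h0: "h0 \<in> space Hm"
  shows "(\<integral>\<^sup>+x. \<psi> x * g (\<tau> x) (fst x) (fst (snd x)) \<partial>(C \<Otimes>\<^sub>M (Hm \<Otimes>\<^sub>M U)))
       = (\<integral>\<^sup>+x. \<psi> x * (\<integral>\<^sup>+c. \<integral>\<^sup>+h. g (\<tau> x) c h \<partial>Hm \<partial>C) \<partial>(C \<Otimes>\<^sub>M (Hm \<Otimes>\<^sub>M U)))"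
proof -
  interpret C: prob_space C by fact
  interpret Hm: prob_space Hm by fact
  interpret U: prob_space U by fact
  interpret HU: prob_space "Hm \<Otimes>\<^sub>M U" by (intro prob_space_pair pH pU)
  interpret CHU: pair_sigma_finite C "Hm \<Otimes>\<^sub>M U" by unfold_locales
  interpret HUp: pair_sigma_finite Hm U by unfold_locales
  interpret CU: pair_sigma_finite C U by unfold_locales
  define a where "a u = \<psi> (c0, h0, u)" for u
  define b where "b u = \<tau> (c0, h0, u)" for u
  have emb: "(\<lambda>u. (c0, h0, u)) \<in> measurable U (C \<Otimes>\<^sub>M (Hm \<Otimes>\<^sub>M U))"
    using c0 h0 by measurable
  have am: "a \<in> borel_measurable U" unfolding a_def using measurable_compose[OF emb \<psi>m] by simp
  have bm: "b \<in> measurable U (count_space UNIV)" unfolding b_def using measurable_compose[OF emb \<tau>m] by simp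
  have \<psi>eq: "\<psi> x = a (snd (snd x))" for x unfolding a_def by (cases x) (auto intro: inv1)
  have \<tau>eq: "\<tau> x = b (snd (snd x))" for x unfolding b_def by (cases x) (auto intro: inv2)
  define gh where "gh s = (\<integral>\<^sup>+c. \<integral>\<^sup>+h. g s c h \<partial>Hm \<partial>C)" for s
  have ghm: "(\<lambda>u. gh (b u)) \<in> borel_measurable U"
    by (rule measurable_compose_countable[OF _ bm]) simp
  have m1: "(\<lambda>x. a (snd (snd x)) * g (b (snd (snd x))) (fst x) (fst (snd x))) \<in> borel_measurable (C \<Otimes>\<^sub>M (Hm \<Otimes>\<^sub>M U))"
  proof (intro borel_measurable_times_ennreal)
    show "(\<lambda>x. a (snd (snd x))) \<in> borel_measurable (C \<Otimes>\<^sub>M (Hm \<Otimes>\<^sub>M U))"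
      by (rule measurable_compose[OF _ am]) measurable
    have b1: "(\<lambda>x. b (snd (snd x))) \<in> measurable (C \<Otimes>\<^sub>M (Hm \<Otimes>\<^sub>M U)) (count_space UNIV)"
      by (rule measurable_compose[OF _ bm]) measurable
    have f1: "fst \<in> measurable (C \<Otimes>\<^sub>M (Hm \<Otimes>\<^sub>M U)) C" by measurable
    have k1: "(\<lambda>x. fst (snd x)) \<in> measurable (C \<Otimes>\<^sub>M (Hm \<Otimes>\<^sub>M U)) Hm" by measurable
    show "(\<lambda>x. g (b (snd (snd x))) (fst x) (fst (snd x))) \<in> borel_measurable (C \<Otimes>\<^sub>M (Hm \<Otimes>\<^sub>M U))"
      using gcomp[OF gm f1 k1 b1] .
  qed
  have m2: "(\<lambda>(h, u). a u * g (b u) c h) \<in> borel_measurable (Hm \<Otimes>\<^sub>M U)" if c: "c \<in> space C" for c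
  proof -
    have "(\<lambda>x. a (snd x) * g (b (snd x)) c (fst x)) \<in> borel_measurable (Hm \<Otimes>\<^sub>M U)"
    proof (intro borel_measurable_times_ennreal)
      show "(\<lambda>x. a (snd x)) \<in> borel_measurable (Hm \<Otimes>\<^sub>M U)"
        by (rule measurable_compose[OF _ am]) measurable
      have b1: "(\<lambda>x. b (snd x)) \<in> measurable (Hm \<Otimes>\<^sub>M U) (count_space UNIV)"
        by (rule measurable_compose[OF _ bm]) measurable
      have f1: "(\<lambda>x. c) \<in> measurable (Hm \<Otimes>\<^sub>M U) C" using c by simp
      have k1: "fst \<in> measurable (Hm \<Otimes>\<^sub>M U) Hm" by measurable
      show "(\<lambda>x. g (b (snd x)) c (fst x)) \<in> borel_measurable (Hm \<Otimes>\<^sub>M U)"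
        using gcomp[OF gm f1 k1 b1] .
    qed
    then show ?thesis by (simp add: split_beta')
  qed
  have m3: "(\<lambda>(c, u). \<integral>\<^sup>+h. a u * g (b u) c h \<partial>Hm) \<in> borel_measurable (C \<Otimes>\<^sub>M U)"
  proof -
    have "(\<lambda>(cu, h). a (snd cu) * g (b (snd cu)) (fst cu) h) \<in> borel_measurable ((C \<Otimes>\<^sub>M U) \<Otimes>\<^sub>M Hm)"
    proof -
      have "(\<lambda>x. a (snd (fst x)) * g (b (snd (fst x))) (fst (fst x)) (snd x)) \<in> borel_measurable ((C \<Otimes>\<^sub>M U) \<Otimes>\<^sub>M Hm)"
      proof (intro borel_measurable_times_ennreal)
        show "(\<lambda>x. a (snd (fst x))) \<in> borel_measurable ((C \<Otimes>\<^sub>M U) \<Otimes>\<^sub>M Hm)"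
          by (rule measurable_compose[OF _ am]) measurable
        have b1: "(\<lambda>x. b (snd (fst x))) \<in> measurable ((C \<Otimes>\<^sub>M U) \<Otimes>\<^sub>M Hm) (count_space UNIV)"
          by (rule measurable_compose[OF _ bm]) measurable
        have f1: "(\<lambda>x. fst (fst x)) \<in> measurable ((C \<Otimes>\<^sub>M U) \<Otimes>\<^sub>M Hm) C" by measurable
        have k1: "snd \<in> measurable ((C \<Otimes>\<^sub>M U) \<Otimes>\<^sub>M Hm) Hm" by measurable
        show "(\<lambda>x. g (b (snd (fst x))) (fst (fst x)) (snd x)) \<in> borel_measurable ((C \<Otimes>\<^sub>M U) \<Otimes>\<^sub>M Hm)"
          using gcomp[OF gm f1 k1 b1] .
      qed
      then show ?thesis by (simp add: split_beta')
    qed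
    from Hm.borel_measurable_nn_integral[OF this] show ?thesis by (simp add: split_beta')
  qed
  have "(\<integral>\<^sup>+x. \<psi> x * g (\<tau> x) (fst x) (fst (snd x)) \<partial>(C \<Otimes>\<^sub>M (Hm \<Otimes>\<^sub>M U)))
      = (\<integral>\<^sup>+x. a (snd (snd x)) * g (b (snd (snd x))) (fst x) (fst (snd x)) \<partial>(C \<Otimes>\<^sub>M (Hm \<Otimes>\<^sub>M U)))"
    by (simp add: \<psi>eq \<tau>eq)
  also have "\<dots> = (\<integral>\<^sup>+c. \<integral>\<^sup>+hu. a (snd hu) * g (b (snd hu)) c (fst hu) \<partial>(Hm \<Otimes>\<^sub>M U) \<partial>C)"
    using HU.nn_integral_fst[OF m1, symmetric] by simp
  also have "\<dots> = (\<integral>\<^sup>+c. \<integral>\<^sup>+h. \<integral>\<^sup>+u. a u * g (b u) c h \<partial>U \<partial>Hm \<partial>C)"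
  proof (rule nn_integral_cong)
    fix c assume c: "c \<in> space C"
    show "(\<integral>\<^sup>+hu. a (snd hu) * g (b (snd hu)) c (fst hu) \<partial>(Hm \<Otimes>\<^sub>M U)) = (\<integral>\<^sup>+h. \<integral>\<^sup>+u. a u * g (b u) c h \<partial>U \<partial>Hm)"
      using U.nn_integral_fst[OF m2[OF c]] by (simp add: split_beta')
  qed
  also have "\<dots> = (\<integral>\<^sup>+c. \<integral>\<^sup>+u. \<integral>\<^sup>+h. a u * g (b u) c h \<partial>Hm \<partial>U \<partial>C)"
  proof (rule nn_integral_cong)
    fix c assume c: "c \<in> space C"
    show "(\<integral>\<^sup>+h. \<integral>\<^sup>+u. a u * g (b u) c h \<partial>U \<partial>Hm) = (\<integral>\<^sup>+u. \<integral>\<^sup>+h. a u * g (b u) c h \<partial>Hm \<partial>U)"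
      using HUp.Fubini'[of "\<lambda>h u. a u * g (b u) c h", OF m2[OF c]] by simp
  qed
  also have "\<dots> = (\<integral>\<^sup>+u. \<integral>\<^sup>+c. \<integral>\<^sup>+h. a u * g (b u) c h \<partial>Hm \<partial>C \<partial>U)"
    using CU.Fubini'[of "\<lambda>c u. \<integral>\<^sup>+h. a u * g (b u) c h \<partial>Hm", OF m3] by simp
  also have "\<dots> = (\<integral>\<^sup>+u. a u * gh (b u) \<partial>U)"
    unfolding gh_def
  proof (intro nn_integral_cong)
    fix u
    have gin: "(\<lambda>h. g s c h) \<in> borel_measurable Hm" if c: "c \<in> space C" for s c
    proof -
      have "(\<lambda>h. (c, h)) \<in> measurable Hm (C \<Otimes>\<^sub>M Hm)" using c by measurable
      from measurable_compose[OF this gm[of s]] show ?thesis by simp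
    qed
    have gout: "(\<lambda>c. \<integral>\<^sup>+h. g s c h \<partial>Hm) \<in> borel_measurable C" for s
      using Hm.borel_measurable_nn_integral[OF gm[of s]] .
    have "(\<integral>\<^sup>+c. \<integral>\<^sup>+h. a u * g (b u) c h \<partial>Hm \<partial>C) = (\<integral>\<^sup>+c. a u * \<integral>\<^sup>+h. g (b u) c h \<partial>Hm \<partial>C)"
      by (intro nn_integral_cong nn_integral_cmult gin)
    also have "\<dots> = a u * (\<integral>\<^sup>+c. \<integral>\<^sup>+h. g (b u) c h \<partial>Hm \<partial>C)"
      by (intro nn_integral_cmult gout)
    finally show "(\<integral>\<^sup>+c. \<integral>\<^sup>+h. a u * g (b u) c h \<partial>Hm \<partial>C) = a u * (\<integral>\<^sup>+c. \<integral>\<^sup>+h. g (b u) c h \<partial>Hm \<partial>C)" .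
  qed
  finally have L: "(\<integral>\<^sup>+x. \<psi> x * g (\<tau> x) (fst x) (fst (snd x)) \<partial>(C \<Otimes>\<^sub>M (Hm \<Otimes>\<^sub>M U))) = (\<integral>\<^sup>+u. a u * gh (b u) \<partial>U)" .
  have m4: "(\<lambda>x. a (snd (snd x)) * gh (b (snd (snd x)))) \<in> borel_measurable (C \<Otimes>\<^sub>M (Hm \<Otimes>\<^sub>M U))"
  proof (intro borel_measurable_times_ennreal)
    have sm: "(\<lambda>x. snd (snd x)) \<in> measurable (C \<Otimes>\<^sub>M (Hm \<Otimes>\<^sub>M U)) U" by measurable
    show "(\<lambda>x. a (snd (snd x))) \<in> borel_measurable (C \<Otimes>\<^sub>M (Hm \<Otimes>\<^sub>M U))"
      using measurable_compose[OF sm am] .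
    show "(\<lambda>x. gh (b (snd (snd x)))) \<in> borel_measurable (C \<Otimes>\<^sub>M (Hm \<Otimes>\<^sub>M U))"
      using measurable_compose[OF sm ghm] .
  qed
  have "(\<integral>\<^sup>+x. \<psi> x * gh (\<tau> x) \<partial>(C \<Otimes>\<^sub>M (Hm \<Otimes>\<^sub>M U)))
      = (\<integral>\<^sup>+x. a (snd (snd x)) * gh (b (snd (snd x))) \<partial>(C \<Otimes>\<^sub>M (Hm \<Otimes>\<^sub>M U)))"
    by (simp add: \<psi>eq \<tau>eq)
  also have "\<dots> = (\<integral>\<^sup>+c. \<integral>\<^sup>+hu. a (snd hu) * gh (b (snd hu)) \<partial>(Hm \<Otimes>\<^sub>M U) \<partial>C)"
    using HU.nn_integral_fst[OF m4, symmetric] by simp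
  also have "\<dots> = (\<integral>\<^sup>+c. \<integral>\<^sup>+h. \<integral>\<^sup>+u. a u * gh (b u) \<partial>U \<partial>Hm \<partial>C)"
  proof (rule nn_integral_cong)
    fix c assume c: "c \<in> space C"
    have "(\<lambda>x. a (snd x) * gh (b (snd x))) \<in> borel_measurable (Hm \<Otimes>\<^sub>M U)"
    proof (intro borel_measurable_times_ennreal)
      have sm: "snd \<in> measurable (Hm \<Otimes>\<^sub>M U) U" by measurable
      show "(\<lambda>x. a (snd x)) \<in> borel_measurable (Hm \<Otimes>\<^sub>M U)"
        using measurable_compose[OF sm am] .
      show "(\<lambda>x. gh (b (snd x))) \<in> borel_measurable (Hm \<Otimes>\<^sub>M U)"
        using measurable_compose[OF sm ghm] .
    qed
    then show "(\<integral>\<^sup>+hu. a (snd hu) * gh (b (snd hu)) \<partial>(Hm \<Otimes>\<^sub>M U)) = (\<integral>\<^sup>+h. \<integral>\<^sup>+u. a u * gh (b u) \<partial>U \<partial>Hm)"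
      using U.nn_integral_fst[of "\<lambda>(h,u). a u * gh (b u)" Hm] by (simp add: split_beta')
  qed
  also have "\<dots> = (\<integral>\<^sup>+u. a u * gh (b u) \<partial>U)"
    by (simp add: C.emeasure_space_1 Hm.emeasure_space_1)
  finally show ?thesis using L unfolding gh_def by simp
qed

lemma KEY:
  fixes C :: "(nat \<Rightarrow> real) measure" and Hm :: "nat measure" and U :: "real measure"
    and Ph :: "(nat \<Rightarrow> (nat \<Rightarrow> real) \<times> nat \<times> real) \<Rightarrow> ennreal"
    and Sg :: "(nat \<Rightarrow> (nat \<Rightarrow> real) \<times> nat \<times> real) \<Rightarrow> nat list"
    and g :: "nat list \<Rightarrow> (nat \<Rightarrow> real) \<Rightarrow> nat \<Rightarrow> ennreal"
  assumes pC: "prob_space C" and pH: "prob_space Hm" and pU: "prob_space U"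
    and Phm: "Ph \<in> borel_measurable (PiM UNIV (\<lambda>_::nat. C \<Otimes>\<^sub>M (Hm \<Otimes>\<^sub>M U)))"
    and Sgm: "Sg \<in> measurable (PiM UNIV (\<lambda>_::nat. C \<Otimes>\<^sub>M (Hm \<Otimes>\<^sub>M U))) (count_space UNIV)"
    and gm: "\<And>s. (\<lambda>(c,h). g s c h) \<in> borel_measurable (C \<Otimes>\<^sub>M Hm)"
    and inv1: "\<And>om c h c' h' u. Ph (om(t := (c,h,u))) = Ph (om(t := (c',h',u)))"
    and inv2: "\<And>om c h c' h' u. Sg (om(t := (c,h,u))) = Sg (om(t := (c',h',u)))"
    and c0: "c0 \<in> space C" and h0: "h0 \<in> space Hm"
  shows "(\<integral>\<^sup>+om. Ph om * g (Sg om) (fst (om t)) (fst (snd (om t))) \<partial>PiM UNIV (\<lambda>_::nat. C \<Otimes>\<^sub>M (Hm \<Otimes>\<^sub>M U)))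
       = (\<integral>\<^sup>+om. Ph om * (\<integral>\<^sup>+c. \<integral>\<^sup>+h. g (Sg om) c h \<partial>Hm \<partial>C) \<partial>PiM UNIV (\<lambda>_::nat. C \<Otimes>\<^sub>M (Hm \<Otimes>\<^sub>M U)))"
proof -
  define R where "R = C \<Otimes>\<^sub>M (Hm \<Otimes>\<^sub>M U)"
  define M where "M = PiM UNIV (\<lambda>_::nat. R)"
  have pR: "prob_space R" unfolding R_def by (intro prob_space_pair pC pH pU)
  interpret R: prob_space R by fact
  have pM: "prob_space M" unfolding M_def by (intro prob_space_PiM pR)
  interpret M: prob_space M by fact
  interpret RM: pair_sigma_finite R M by unfold_locales
  have D: "distr (R \<Otimes>\<^sub>M M) M (\<lambda>(x, X). X(t := x)) = M"
    using distr_pair_PiM_eq_PiM[of UNIV "\<lambda>_. R" t] pR unfolding M_def by simp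
  have updm: "(\<lambda>(x, X). X(t := x)) \<in> measurable (R \<Otimes>\<^sub>M M) M"
  proof -
    have "(\<lambda>p. (snd p) (t := fst p)) \<in> measurable (R \<Otimes>\<^sub>M M) M"
      unfolding M_def by (rule measurable_fun_upd[where J=UNIV]) (auto simp: M_def[symmetric])
    then show ?thesis by (simp add: split_beta')
  qed
  have upd1: "(\<lambda>x. X(t := x)) \<in> measurable R M" if X: "X \<in> space M" for X
    unfolding M_def by (rule measurable_fun_upd[where J=UNIV]) (use X in \<open>auto simp: M_def\<close>)
  have split: "(\<integral>\<^sup>+om. F om \<partial>M) = (\<integral>\<^sup>+X. \<integral>\<^sup>+x. F (X(t := x)) \<partial>R \<partial>M)"
    if Fm: "F \<in> borel_measurable M" for F
  proof -
    have "integral\<^sup>N (distr (R \<Otimes>\<^sub>M M) M (\<lambda>(x, X). X(t := x))) F = (\<integral>\<^sup>+p. F (case p of (x, X) \<Rightarrow> X(t := x)) \<partial>(R \<Otimes>\<^sub>M M))"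
      by (rule nn_integral_distr[OF updm]) (simp add: D Fm)
    then have "(\<integral>\<^sup>+om. F om \<partial>M) = (\<integral>\<^sup>+p. F (case p of (x, X) \<Rightarrow> X(t := x)) \<partial>(R \<Otimes>\<^sub>M M))"
      by (simp add: D)
    also have "\<dots> = (\<integral>\<^sup>+X. \<integral>\<^sup>+x. F (X(t := x)) \<partial>R \<partial>M)"
    proof -
      have "(\<lambda>p. F (case p of (x, X) \<Rightarrow> X(t := x))) \<in> borel_measurable (R \<Otimes>\<^sub>M M)"
        using measurable_compose[OF updm Fm] by simp
      from RM.nn_integral_snd[OF this] show ?thesis by simp
    qed
    finally show ?thesis .
  qed
  define gh where "gh s = (\<integral>\<^sup>+c. \<integral>\<^sup>+h. g s c h \<partial>Hm \<partial>C)" for s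
  have Phm': "Ph \<in> borel_measurable M" using Phm unfolding M_def R_def .
  have Sgm': "Sg \<in> measurable M (count_space UNIV)" using Sgm unfolding M_def R_def .
  have Fm1: "(\<lambda>om. Ph om * g (Sg om) (fst (om t)) (fst (snd (om t)))) \<in> borel_measurable M"
  proof (intro borel_measurable_times_ennreal Phm')
    have ct: "(\<lambda>om. om t) \<in> measurable M R" unfolding M_def by (rule measurable_component_singleton) simp
    have fR: "fst \<in> measurable R C" unfolding R_def by (rule measurable_fst)
    have sR: "snd \<in> measurable R (Hm \<Otimes>\<^sub>M U)" unfolding R_def by (rule measurable_snd)
    have f1: "(\<lambda>om. fst (om t)) \<in> measurable M C"
      using measurable_compose[OF ct fR] .
    have k1: "(\<lambda>om. fst (snd (om t))) \<in> measurable M Hm"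
      using measurable_compose[OF measurable_compose[OF ct sR] measurable_fst] .
    show "(\<lambda>om. g (Sg om) (fst (om t)) (fst (snd (om t)))) \<in> borel_measurable M"
      using gcomp[OF gm f1 k1 Sgm'] .
  qed
  have Fm2: "(\<lambda>om. Ph om * gh (Sg om)) \<in> borel_measurable M"
  proof (rule borel_measurable_times_ennreal[OF Phm'])
    show "(\<lambda>om. gh (Sg om)) \<in> borel_measurable M" by (rule measurable_compose_countable[OF _ Sgm']) simp
  qed
  have "(\<integral>\<^sup>+om. Ph om * g (Sg om) (fst (om t)) (fst (snd (om t))) \<partial>M)
      = (\<integral>\<^sup>+X. \<integral>\<^sup>+x. Ph (X(t := x)) * g (Sg (X(t := x))) (fst x) (fst (snd x)) \<partial>R \<partial>M)"
    using split[OF Fm1] by simp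
  also have "\<dots> = (\<integral>\<^sup>+X. \<integral>\<^sup>+x. Ph (X(t := x)) * gh (Sg (X(t := x))) \<partial>R \<partial>M)"
  proof (rule nn_integral_cong)
    fix X assume X: "X \<in> space M"
    have \<psi>m: "(\<lambda>x. Ph (X(t := x))) \<in> borel_measurable (C \<Otimes>\<^sub>M (Hm \<Otimes>\<^sub>M U))"
      using measurable_compose[OF upd1[OF X] Phm'] unfolding R_def .
    have \<tau>m: "(\<lambda>x. Sg (X(t := x))) \<in> measurable (C \<Otimes>\<^sub>M (Hm \<Otimes>\<^sub>M U)) (count_space UNIV)"
      using measurable_compose[OF upd1[OF X] Sgm'] unfolding R_def .
    show "(\<integral>\<^sup>+x. Ph (X(t := x)) * g (Sg (X(t := x))) (fst x) (fst (snd x)) \<partial>R)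
        = (\<integral>\<^sup>+x. Ph (X(t := x)) * gh (Sg (X(t := x))) \<partial>R)"
      unfolding R_def gh_def
      by (rule R_lemma[OF pC pH pU \<psi>m \<tau>m gm _ _ c0 h0]) (rule inv1, rule inv2)
  qed
  also have "\<dots> = (\<integral>\<^sup>+om. Ph om * gh (Sg om) \<partial>M)"
    using split[OF Fm2] by simp
  finally show ?thesis unfolding M_def R_def gh_def .
qed


definition costf :: "nat list \<Rightarrow> (nat \<Rightarrow> real) \<Rightarrow> nat \<Rightarrow> real" where
  "costf s c h = sum_list (map c (sprefix s (hider_vec h)))"
definition rewf :: "nat list \<Rightarrow> nat \<Rightarrow> real" where
  "rewf s h = sum_list (map (hider_vec h) (sprefix s (hider_vec h)))"

definition pm :: "nat list \<Rightarrow> nat \<Rightarrow> nat" where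
  "pm s h = (if h \<in> set s then Suc (LEAST k. k < length s \<and> s ! k = h) else length s)"

lemma hv1: "hider_vec h i = 1 \<longleftrightarrow> i = h" by (simp add: hider_vec_def)

lemma sprefix_pm: "sprefix s (hider_vec h) = take (pm s h) s"
proof -
  have e1: "(\<exists>i\<in>set s. hider_vec h i = 1) = (h \<in> set s)" by (auto simp: hv1)
  have e2: "(\<lambda>k. k < length s \<and> hider_vec h (s ! k) = 1) = (\<lambda>k. k < length s \<and> s ! k = h)"
    by (auto simp: hv1)
  show ?thesis unfolding sprefix_def pm_def e1 e2 by simp
qed

lemma pm_iff:
  assumes "i < length s"
  shows "i < pm s h \<longleftrightarrow> (\<forall>j<i. s ! j \<noteq> h)"
proof (cases "h \<in> set s")
  case True
  let ?P = "\<lambda>k. k < length s \<and> s ! k = h"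
  obtain k where "k < length s" "s ! k = h" using True by (auto simp: in_set_conv_nth)
  then have P0: "?P (Least ?P)" by (intro LeastI[of ?P k]) auto
  have pmv: "pm s h = Suc (Least ?P)" using True by (simp add: pm_def)
  show ?thesis
  proof
    assume "i < pm s h"
    then have "i \<le> Least ?P" using pmv by simp
    show "\<forall>j<i. s ! j \<noteq> h"
    proof (intro allI impI)
      fix j assume "j < i"
      then have "j < Least ?P" using \<open>i \<le> Least ?P\<close> by simp
      then have "\<not> ?P j" by (rule not_less_Least)
      then show "s ! j \<noteq> h" using \<open>j < i\<close> assms by simp
    qed
  next
    assume A: "\<forall>j<i. s ! j \<noteq> h"
    show "i < pm s h"
    proof (rule ccontr)
      assume "\<not> i < pm s h"
      then have "Least ?P < i" using pmv by simp
      then show False using A P0 by blast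
    qed
  qed
next
  case False
  then have "pm s h = length s" by (simp add: pm_def)
  moreover have "\<forall>j<i. s ! j \<noteq> h" using False assms by (auto simp: in_set_conv_nth)
  ultimately show ?thesis using assms by simp
qed

lemma sum_list_take:
  "sum_list (map f (take m s)) = (\<Sum>i<length s. if i < m then f (s ! i) else 0)"
proof -
  have "sum_list (map f (take m s)) = (\<Sum>i<length (take m s). f (take m s ! i))"
    by (simp add: sum_list_sum_nth atLeast0LessThan)
  also have "\<dots> = (\<Sum>i<min m (length s). f (s ! i))" by (simp add: min.commute)
  also have "\<dots> = (\<Sum>i\<in>{i\<in>{..<length s}. i < m}. f (s ! i))"
    by (intro sum.cong) auto
  also have "\<dots> = (\<Sum>i<length s. if i < m then f (s ! i) else 0)"
    by (rule sum.inter_filter) simp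
  finally show ?thesis .
qed

lemma costf_alt: "costf s c h = (\<Sum>i<length s. if \<forall>j<i. s ! j \<noteq> h then c (s ! i) else 0)"
  unfolding costf_def sprefix_pm sum_list_take
  by (intro sum.cong refl) (simp add: pm_iff)

lemma sum_list_zero: "(\<And>x. x \<in> set L \<Longrightarrow> f x = 0) \<Longrightarrow> sum_list (map f L) = (0::real)"
  by (induction L) auto

lemma rewf_alt: "rewf s h = (if h \<in> set s then 1 else 0)"
proof (cases "h \<in> set s")
  case True
  let ?P = "\<lambda>k. k < length s \<and> s ! k = h"
  obtain k where "k < length s" "s ! k = h" using True by (auto simp: in_set_conv_nth)
  then have P0: "?P (Least ?P)" by (intro LeastI[of ?P k]) auto
  have pmv: "pm s h = Suc (Least ?P)" using True by (simp add: pm_def)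
  have tk: "take (Suc (Least ?P)) s = take (Least ?P) s @ [s ! Least ?P]"
    using P0 by (intro take_Suc_conv_app_nth) simp
  have z: "sum_list (map (hider_vec h) (take (Least ?P) s)) = 0"
  proof (rule sum_list_zero)
    fix x assume "x \<in> set (take (Least ?P) s)"
    then obtain j where j: "j < Least ?P" "x = s ! j" using P0 by (auto simp: in_set_conv_nth)
    then have "\<not> ?P j" by (intro not_less_Least)
    then have "x \<noteq> h" using j P0 by auto
    then show "hider_vec h x = 0" by (simp add: hider_vec_def)
  qed
  show ?thesis unfolding rewf_def sprefix_pm pmv tk using z P0 True by (simp add: hider_vec_def)
next
  case False
  have "sprefix s (hider_vec h) = s" unfolding sprefix_pm using False by (simp add: pm_def)
  moreover have "sum_list (map (hider_vec h) s) = 0"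
    by (rule sum_list_zero) (use False in \<open>auto simp: hider_vec_def\<close>)
  ultimately show ?thesis using False by (simp add: rewf_def)
qed

lemma set_sprefix: "set (sprefix s W) \<subseteq> set s"
  unfolding sprefix_def by (auto dest: in_set_takeD)

lemma length_sprefix: "length (sprefix s W) \<le> length s"
  unfolding sprefix_def by auto


context setting begin

abbreviation "CC \<equiv> PiM {1..n} \<mu>"
abbreviation "Hm \<equiv> measure_pmf H"
abbreviation "UU \<equiv> uniform_measure lborel {0..1::real}"

lemma mu_i: "i \<in> {1..n} \<Longrightarrow> prob_space (\<mu> i)" "i \<in> {1..n} \<Longrightarrow> sets (\<mu> i) = sets borel"
  "i \<in> {1..n} \<Longrightarrow> emeasure (\<mu> i) {0..1} = 1" "i \<in> {1..n} \<Longrightarrow> (\<integral>x. x \<partial>(\<mu> i)) = cstar i"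
  using mu by blast+

lemma pC: "prob_space CC" by (intro prob_space_PiM mu_i)
lemma pH: "prob_space Hm" by (rule prob_space_measure_pmf)
lemma pU: "prob_space UU" by (intro prob_space_uniform_measure) auto

lemma comp_meas: "(\<lambda>c. c i) \<in> borel_measurable CC"
proof (cases "i \<in> {1..n}")
  case True
  have "(\<lambda>c. c i) \<in> measurable CC (\<mu> i)" using True by (rule measurable_component_singleton)
  then show ?thesis using mu_i(2)[OF True] by (simp cong: measurable_cong_sets)
next
  case False
  have "(\<lambda>c. c i) \<in> borel_measurable CC \<longleftrightarrow> (\<lambda>c. undefined :: real) \<in> borel_measurable CC"
    by (rule measurable_cong) (use False in \<open>auto simp: space_PiM PiE_def extensional_def\<close>)
  then show ?thesis by simp
qed

lemma sumlist_meas: "(\<lambda>c. sum_list (map c L)) \<in> borel_measurable CC"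
proof (induction L)
  case Nil then show ?case by simp
next
  case (Cons a L)
  show ?case using borel_measurable_add[OF comp_meas[of a] Cons.IH] by simp
qed

lemma snd_count: "snd \<in> measurable (CC \<Otimes>\<^sub>M Hm) (count_space UNIV)"
proof -
  have "snd \<in> measurable (CC \<Otimes>\<^sub>M Hm) Hm" by (rule measurable_snd)
  then show ?thesis by (simp cong: measurable_cong_sets add: sets_measure_pmf_count_space)
qed

lemma costf_meas: "(\<lambda>(c, h). ennreal (costf s c h)) \<in> borel_measurable (CC \<Otimes>\<^sub>M Hm)"
proof -
  have "(\<lambda>x. ennreal (costf s (fst x) (snd x))) \<in> borel_measurable (CC \<Otimes>\<^sub>M Hm)"
  proof (rule measurable_compose_countable[where f="\<lambda>h x. ennreal (costf s (fst x) h)", OF _ snd_count])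
    fix h
    have "(\<lambda>c. costf s c h) \<in> borel_measurable CC" unfolding costf_def by (rule sumlist_meas)
    then have "(\<lambda>x. costf s (fst x) h) \<in> borel_measurable (CC \<Otimes>\<^sub>M Hm)"
      using measurable_compose[OF measurable_fst] by blast
    then show "(\<lambda>x. ennreal (costf s (fst x) h)) \<in> borel_measurable (CC \<Otimes>\<^sub>M Hm)"
      using measurable_compose[OF _ measurable_ennreal] by blast
  qed
  then show ?thesis by (simp add: split_beta')
qed

lemma rewf_meas: "(\<lambda>(c, h). ennreal (rewf s h)) \<in> borel_measurable (CC \<Otimes>\<^sub>M Hm)"
proof -
  have "(\<lambda>x. ennreal (rewf s (snd x))) \<in> borel_measurable (CC \<Otimes>\<^sub>M Hm)"
    by (rule measurable_compose_countable[where f="\<lambda>h x. ennreal (rewf s h)", OF _ snd_count]) simp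
  then show ?thesis by (simp add: split_beta')
qed

lemma E_comp: assumes k: "k \<in> {1..n}" shows "(\<integral>\<^sup>+c. ennreal (c k) \<partial>CC) = ennreal (cstar k)"
proof -
  interpret mk: prob_space "\<mu> k" using mu_i(1)[OF k] .
  have D: "distr CC (\<mu> k) (\<lambda>c. c k) = \<mu> k"
    by (rule distr_PiM_component[OF mu_i(1) k])
  have mk: "(\<lambda>c. c k) \<in> measurable CC (\<mu> k)" using k by (rule measurable_component_singleton)
  have "(\<integral>\<^sup>+c. ennreal (c k) \<partial>CC) = (\<integral>\<^sup>+x. ennreal x \<partial>distr CC (\<mu> k) (\<lambda>c. c k))"
    by (rule nn_integral_distr[symmetric, OF mk]) (simp add: mu_i(2)[OF k] cong: measurable_cong_sets)
  also have "\<dots> = (\<integral>\<^sup>+x. ennreal x \<partial>\<mu> k)" unfolding D ..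
  also have "\<dots> = ennreal (\<integral>x. x \<partial>(\<mu> k))"
  proof (rule nn_integral_eq_integral)
    show "integrable (\<mu> k) (\<lambda>x. x)"
      using not_integrable_integral_eq[of "\<mu> k" "\<lambda>x. x"] mu_i(4)[OF k] cpos[OF k] by auto
    have "mk.prob {0..1} = 1" using mu_i(3)[OF k] by (simp add: mk.emeasure_eq_measure)
    then have "AE x in \<mu> k. x \<in> {0..1}" by (rule mk.AE_prob_1)
    then show "AE x in \<mu> k. 0 \<le> x" by eventually_elim auto
  qed
  finally show ?thesis using mu_i(4)[OF k] by simp
qed

lemma AE_C: "AE c in CC. \<forall>i\<in>{1..n}. 0 \<le> c i \<and> c i \<le> 1"
proof (rule eventually_ball_finite)
  show "finite {1..n}" by simp
  show "\<forall>i\<in>{1..n}. AE c in CC. 0 \<le> c i \<and> c i \<le> 1"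
  proof
    fix i assume i: "i \<in> {1..n}"
    interpret mk: prob_space "\<mu> i" using mu_i(1)[OF i] .
    have "mk.prob {0..1} = 1" using mu_i(3)[OF i] by (simp add: mk.emeasure_eq_measure)
    then have "AE x in \<mu> i. x \<in> {0..1}" by (rule mk.AE_prob_1)
    then have "AE x in \<mu> i. 0 \<le> x \<and> x \<le> 1" by eventually_elim auto
    then have "AE c in CC. (\<lambda>x. 0 \<le> x \<and> x \<le> 1) (c i)"
      by (intro AE_PiM_component[OF mu_i(1) i]) simp_all
    then show "AE c in CC. 0 \<le> c i \<and> c i \<le> 1" by simp
  qed
qed

lemma E_rew: assumes s: "s \<in> searches n E"
  shows "(\<integral>\<^sup>+c. \<integral>\<^sup>+h. ennreal (rewf s h) \<partial>Hm \<partial>CC) = ennreal (Dw s wstar)"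
proof -
  interpret C: prob_space CC by (rule pC)
  have ss: "set s \<subseteq> {1..n}" and d: "distinct s" using searchesD[OF s] by auto
  have "(\<integral>\<^sup>+h. ennreal (rewf s h) \<partial>Hm) = (\<integral>\<^sup>+h. indicator (set s) h \<partial>Hm)"
    by (intro nn_integral_cong) (simp add: rewf_alt indicator_def)
  also have "\<dots> = emeasure Hm (set s)" by simp
  also have "\<dots> = ennreal (measure Hm (set s))" by (simp add: measure_pmf.emeasure_eq_measure)
  also have "measure Hm (set s) = sum (pmf H) (set s)" by (simp add: measure_measure_pmf_finite)
  also have "\<dots> = sum wstar (set s)" using ss Hw by (intro sum.cong) auto
  also have "\<dots> = Dw s wstar" unfolding Dw_def using sum_nth_take[OF d order_refl, of wstar] by simp
  finally have X: "(\<integral>\<^sup>+h. ennreal (rewf s h) \<partial>Hm) = ennreal (Dw s wstar)" .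
  show ?thesis using C.emeasure_space_1 by (simp add: X)
qed

lemma E_cost: assumes s: "s \<in> searches n E"
  shows "(\<integral>\<^sup>+c. \<integral>\<^sup>+h. ennreal (costf s c h) \<partial>Hm \<partial>CC) = ennreal (Nm s wstar cstar)"
proof -
  interpret C: prob_space CC by (rule pC)
  have ss: "set s \<subseteq> {1..n}" and d: "distinct s" using searchesD[OF s] by auto
  define q where "q i = 1 - (\<Sum>j<i. wstar (s ! j))" for i
  define A where "A i = {h. \<forall>j<i. s ! j \<noteq> h}" for i
  have qnn: "0 \<le> q i" if "i < length s" for i using prefix_w(2)[OF s, of i] that by (simp add: q_def)
  have sk: "s ! i \<in> {1..n}" if "i < length s" for i using searches_nth[OF s that] .
  have PA: "emeasure Hm (A i) = ennreal (q i)" if i: "i < length s" for i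
  proof -
    have "A i = UNIV - set (take i s)"
    proof (intro set_eqI iffI)
      fix h assume "h \<in> A i"
      then have "\<forall>j<i. s ! j \<noteq> h" by (simp add: A_def)
      then show "h \<in> UNIV - set (take i s)" using i by (auto simp: in_set_conv_nth)
    next
      fix h assume "h \<in> UNIV - set (take i s)"
      then have "\<forall>j<i. s ! j \<noteq> h" using i by (auto simp: in_set_conv_nth)
      then show "h \<in> A i" by (simp add: A_def)
    qed
    then have "measure Hm (A i) = 1 - measure Hm (set (take i s))"
      using measure_pmf.prob_compl[of "set (take i s)" H] by (simp add: Compl_eq_Diff_UNIV)
    also have "measure Hm (set (take i s)) = sum (pmf H) (set (take i s))"
      by (simp add: measure_measure_pmf_finite)
    also have "\<dots> = sum wstar (set (take i s))"
      using ss Hw set_take_subset[of i s] by (intro sum.cong) auto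
    also have "\<dots> = (\<Sum>j<i. wstar (s ! j))" by (rule sum_nth_take[OF d, symmetric]) (use i in simp)
    finally show ?thesis by (simp add: measure_pmf.emeasure_eq_measure q_def)
  qed
  have inner: "(\<integral>\<^sup>+h. ennreal (costf s c h) \<partial>Hm) = (\<Sum>i<length s. ennreal (c (s ! i)) * ennreal (q i))"
    if c: "\<forall>i\<in>{1..n}. 0 \<le> c i \<and> c i \<le> 1" for c
  proof -
    have cnn: "0 \<le> c (s ! i)" if "i < length s" for i using c sk[OF that] by blast
    have "(\<integral>\<^sup>+h. ennreal (costf s c h) \<partial>Hm) = (\<integral>\<^sup>+h. (\<Sum>i<length s. ennreal (c (s ! i)) * indicator (A i) h) \<partial>Hm)"
    proof (intro nn_integral_cong)
      fix h
      have "ennreal (costf s c h) = (\<Sum>i<length s. ennreal (if \<forall>j<i. s ! j \<noteq> h then c (s ! i) else 0))"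
        unfolding costf_alt by (rule sum_ennreal[symmetric]) (simp add: cnn)
      also have "\<dots> = (\<Sum>i<length s. ennreal (c (s ! i)) * indicator (A i) h)"
        by (intro sum.cong) (auto simp: A_def indicator_def)
      finally show "ennreal (costf s c h) = (\<Sum>i<length s. ennreal (c (s ! i)) * indicator (A i) h)" .
    qed
    also have "\<dots> = (\<Sum>i<length s. \<integral>\<^sup>+h. ennreal (c (s ! i)) * indicator (A i) h \<partial>Hm)"
      by (rule nn_integral_sum) simp
    also have "\<dots> = (\<Sum>i<length s. ennreal (c (s ! i)) * ennreal (q i))"
      by (intro sum.cong refl) (simp add: nn_integral_cmult_indicator PA)
    finally show ?thesis .
  qed
  have "(\<integral>\<^sup>+c. \<integral>\<^sup>+h. ennreal (costf s c h) \<partial>Hm \<partial>CC)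
      = (\<integral>\<^sup>+c. (\<Sum>i<length s. ennreal (c (s ! i)) * ennreal (q i)) \<partial>CC)"
    by (rule nn_integral_cong_AE) (use AE_C in \<open>eventually_elim, simp add: inner\<close>)
  also have "\<dots> = (\<Sum>i<length s. \<integral>\<^sup>+c. ennreal (c (s ! i)) * ennreal (q i) \<partial>CC)"
  proof (rule nn_integral_sum)
    fix i
    have "(\<lambda>c. ennreal (c (s ! i))) \<in> borel_measurable CC"
      using measurable_compose[OF comp_meas measurable_ennreal] by simp
    then show "(\<lambda>c. ennreal (c (s ! i)) * ennreal (q i)) \<in> borel_measurable CC" by simp
  qed
  also have "\<dots> = (\<Sum>i<length s. ennreal (cstar (s ! i)) * ennreal (q i))"
  proof (intro sum.cong refl)
    fix i assume i: "i \<in> {..<length s}"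
    have m: "(\<lambda>c. ennreal (c (s ! i))) \<in> borel_measurable CC"
      using measurable_compose[OF comp_meas measurable_ennreal] by simp
    have "(\<integral>\<^sup>+c. ennreal (c (s ! i)) * ennreal (q i) \<partial>CC) = (\<integral>\<^sup>+c. ennreal (c (s ! i)) \<partial>CC) * ennreal (q i)"
      by (rule nn_integral_multc[OF m])
    also have "\<dots> = ennreal (cstar (s ! i)) * ennreal (q i)" using E_comp[OF sk] i by simp
    finally show "(\<integral>\<^sup>+c. ennreal (c (s ! i)) * ennreal (q i) \<partial>CC) = ennreal (cstar (s ! i)) * ennreal (q i)" .
  qed
  also have "\<dots> = (\<Sum>i<length s. ennreal (cstar (s ! i) * q i))"
    by (intro sum.cong refl) (simp add: ennreal_mult cpos[OF sk] less_imp_le qnn)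
  also have "\<dots> = ennreal (\<Sum>i<length s. cstar (s ! i) * q i)"
    by (rule sum_ennreal) (simp add: cpos[OF sk] less_imp_le qnn)
  also have "\<dots> = ennreal (Nm s wstar cstar)" by (simp add: Nm_def q_def)
  finally show ?thesis .
qed

end


lemma obs_hist_cong: "(\<And>u. u < t \<Longrightarrow> om u = om' u) \<Longrightarrow> obs_hist p om t = obs_hist p om' t"
proof (induction t)
  case 0 then show ?case by simp
next
  case (Suc t)
  have IH: "obs_hist p om t = obs_hist p om' t" using Suc by simp
  have se: "seeds om t = seeds om' t" unfolding seeds_def using Suc.prems by (intro map_cong) auto
  show ?case using IH se Suc.prems[of t] by simp
qed

lemma choice_cong:
  assumes "\<And>u. u < t \<Longrightarrow> om u = om' u" "snd (snd (om t)) = snd (snd (om' t))"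
  shows "choice p om t = choice p om' t"
proof -
  have se: "seeds om t = seeds om' t" unfolding seeds_def using assms
    by (intro map_cong) (auto simp: less_Suc_eq)
  show ?thesis unfolding choice_def using obs_hist_cong[of t om om' p, OF assms(1)] se by simp
qed

lemma round_cost_eq: "round_cost p om t = costf (choice p om t) (fst (om t)) (fst (snd (om t)))"
  unfolding round_cost_def costf_def by (cases "om t") auto

lemma round_reward_eq: "round_reward p om t = rewf (choice p om t) (fst (snd (om t)))"
  unfolding round_reward_def rewf_def by (cases "om t") auto

lemma round_cost_cong: "(\<And>u. u \<le> t \<Longrightarrow> om u = om' u) \<Longrightarrow> round_cost p om t = round_cost p om' t"
  unfolding round_cost_eq using choice_cong[of t om om' p] by simp

definition At :: "real \<Rightarrow> policy \<Rightarrow> nat \<Rightarrow> (nat \<Rightarrow> round) \<Rightarrow> bool" where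
  "At B p t om = (\<forall>u<t. 0 \<le> budget_left B p om u)"

lemma At_cong: "(\<And>u. u < t \<Longrightarrow> om u = om' u) \<Longrightarrow> At B p t om = At B p t om'"
proof -
  assume h: "\<And>u. u < t \<Longrightarrow> om u = om' u"
  have "budget_left B p om u = budget_left B p om' u" if "u < t" for u
    unfolding budget_left_def using that h by (intro arg_cong[where f="\<lambda>x. B - x"] sum.cong refl round_cost_cong) auto
  then show ?thesis unfolding At_def by auto
qed

lemma At_Suc: "At B p (Suc t) om \<Longrightarrow> At B p t om"
  unfolding At_def by auto

lemma stop_At: "enat t < stop_time B p om \<longleftrightarrow> At B p (Suc t) om"
proof (cases "\<exists>u. budget_left B p om u < 0")
  case True
  let ?L = "LEAST u. budget_left B p om u < 0"
  have st: "stop_time B p om = enat ?L" using True by (simp add: stop_time_def)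
  have L: "budget_left B p om ?L < 0" using True by (metis LeastI)
  show ?thesis
  proof
    assume "enat t < stop_time B p om"
    then have "t < ?L" using st by simp
    then show "At B p (Suc t) om" unfolding At_def using not_less_Least
      by (metis less_Suc_eq_le not_le order.strict_trans1)
  next
    assume "At B p (Suc t) om"
    then have "\<forall>u\<le>t. 0 \<le> budget_left B p om u" unfolding At_def by auto
    then have "t < ?L" using L by (metis not_le not_less)
    then show "enat t < stop_time B p om" using st by simp
  qed
next
  case False
  then have "stop_time B p om = \<infinity>" by (simp add: stop_time_def)
  moreover have "At B p (Suc t) om" using False unfolding At_def by (auto simp: not_less)
  ultimately show ?thesis by simp
qed

context setting begin

abbreviation "Mm \<equiv> omega_measure n \<mu> H"

lemma Mm_eq: "Mm = PiM UNIV (\<lambda>_::nat. CC \<Otimes>\<^sub>M (Hm \<Otimes>\<^sub>M UU))"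
  unfolding omega_measure_def round_measure_def ..

lemma pR: "prob_space (CC \<Otimes>\<^sub>M (Hm \<Otimes>\<^sub>M UU))"
  by (intro prob_space_pair pC pH pU)

lemma pM: "prob_space Mm"
  unfolding Mm_eq by (intro prob_space_PiM pR)

lemma costf_meas_real: "(\<lambda>x. costf s (fst x) (snd x)) \<in> borel_measurable (CC \<Otimes>\<^sub>M Hm)"
proof (rule measurable_compose_countable[where f="\<lambda>h x. costf s (fst x) h", OF _ snd_count])
  fix h
  have "(\<lambda>c. costf s c h) \<in> borel_measurable CC" unfolding costf_def by (rule sumlist_meas)
  then show "(\<lambda>x. costf s (fst x) h) \<in> borel_measurable (CC \<Otimes>\<^sub>M Hm)"
    using measurable_compose[OF measurable_fst] by blast
qed

lemma ct_meas: "(\<lambda>om. om t) \<in> measurable Mm (CC \<Otimes>\<^sub>M (Hm \<Otimes>\<^sub>M UU))"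
  unfolding Mm_eq by (rule measurable_component_singleton) simp

lemma ch_meas: "(\<lambda>om. (fst (om t), fst (snd (om t)))) \<in> measurable Mm (CC \<Otimes>\<^sub>M Hm)"
proof (rule measurable_Pair)
  show "(\<lambda>om. fst (om t)) \<in> measurable Mm CC" using measurable_compose[OF ct_meas measurable_fst] .
  show "(\<lambda>om. fst (snd (om t))) \<in> measurable Mm Hm"
    using measurable_compose[OF measurable_compose[OF ct_meas measurable_snd] measurable_fst] .
qed

definition valid :: "policy \<Rightarrow> bool" where
  "valid p \<longleftrightarrow> (\<forall>t. (\<lambda>om. choice p om t) \<in> measurable Mm (count_space UNIV))"

lemma cost_meas: assumes "valid p" shows "(\<lambda>om. round_cost p om t) \<in> borel_measurable Mm"
proof -
  have "(\<lambda>om. costf (choice p om t) (fst (om t)) (fst (snd (om t)))) \<in> borel_measurable Mm"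
  proof (rule measurable_compose_countable[where f="\<lambda>s om. costf s (fst (om t)) (fst (snd (om t)))"])
    fix s show "(\<lambda>om. costf s (fst (om t)) (fst (snd (om t)))) \<in> borel_measurable Mm"
      using measurable_compose[OF ch_meas costf_meas_real] by simp
    show "(\<lambda>om. choice p om t) \<in> measurable Mm (count_space UNIV)" using assms by (simp add: valid_def)
  qed
  then show ?thesis by (simp add: round_cost_eq)
qed

lemma rew_meas: assumes "valid p" shows "(\<lambda>om. round_reward p om t) \<in> borel_measurable Mm"
proof -
  have h: "(\<lambda>om. fst (snd (om t))) \<in> measurable Mm (count_space UNIV)"
    using measurable_compose[OF ch_meas snd_count] by simp
  have "(\<lambda>om. rewf (choice p om t) (fst (snd (om t)))) \<in> borel_measurable Mm"
  proof (rule measurable_compose_countable[where f="\<lambda>s om. rewf s (fst (snd (om t)))"])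
    fix s show "(\<lambda>om. rewf s (fst (snd (om t)))) \<in> borel_measurable Mm"
      by (rule measurable_compose_countable[where f="\<lambda>h om. rewf s h", OF _ h]) simp
    show "(\<lambda>om. choice p om t) \<in> measurable Mm (count_space UNIV)" using assms by (simp add: valid_def)
  qed
  then show ?thesis by (simp add: round_reward_eq)
qed

lemma bl_meas: assumes "valid p" shows "(\<lambda>om. budget_left B p om u) \<in> borel_measurable Mm"
  unfolding budget_left_def using cost_meas[OF assms] by measurable

lemma At_sets: assumes "valid p" shows "{om \<in> space Mm. At B p t om} \<in> sets Mm"
proof -
  note bl_meas[OF assms, measurable]
  have "{om \<in> space Mm. \<forall>u\<in>{..<t}. 0 \<le> budget_left B p om u} \<in> sets Mm"
    by (intro sets.sets_Collect_finite_All) auto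
  then show ?thesis unfolding At_def by simp
qed

lemma Ph_meas: assumes "valid p"
  shows "(\<lambda>om. if At B p t om then 1 else 0 :: ennreal) \<in> borel_measurable Mm"
proof -
  have "(\<lambda>om. indicator {om \<in> space Mm. At B p t om} om :: ennreal) \<in> borel_measurable Mm"
    using At_sets[OF assms] by (rule borel_measurable_indicator)
  then show ?thesis by (rule measurable_cong[THEN iffD1, rotated]) (simp add: indicator_def)
qed

end


definition Ab :: "real \<Rightarrow> (nat \<Rightarrow> real) \<Rightarrow> nat \<Rightarrow> bool" where
  "Ab B x t = (\<forall>u<t. 0 \<le> B - (\<Sum>v\<le>u. x v))"

lemma PB_real:
  assumes x: "\<And>t. 0 \<le> x t \<and> x t \<le> K" and B: "0 \<le> B"
  shows "(Ab B x N \<longrightarrow> (\<Sum>t<N. if Ab B x t then x t else 0) = (\<Sum>t<N. x t)) \<and>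
         (\<Sum>t<N. if Ab B x t then x t else 0) \<le> B + K"
proof (induction N)
  case 0 then show ?case using B x[of 0] by simp
next
  case (Suc N)
  show ?case
  proof (cases "Ab B x N")
    case True
    have eq: "(\<Sum>t<N. if Ab B x t then x t else 0) = (\<Sum>t<N. x t)" using Suc True by simp
    have le: "(\<Sum>t<N. x t) \<le> B"
    proof (cases N)
      case 0 then show ?thesis using B by simp
    next
      case (Suc M)
      have "0 \<le> B - (\<Sum>v\<le>M. x v)" using True Suc unfolding Ab_def by simp
      moreover have "(\<Sum>v\<le>M. x v) = (\<Sum>t<N. x t)" using Suc by (simp add: lessThan_Suc_atMost)
      ultimately show ?thesis by simp
    qed
    show ?thesis using eq le x[of N] True by simp
  next
    case False
    have "\<not> Ab B x (Suc N)" using False unfolding Ab_def using less_SucI by blast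
    then show ?thesis using Suc False by simp
  qed
qed

lemma PB:
  assumes x: "\<And>t. 0 \<le> x t \<and> x t \<le> K" and B: "0 \<le> B"
  shows "(\<Sum>t. (if Ab B x t then 1 else 0) * ennreal (x t)) \<le> ennreal (B + K)"
proof (rule suminf_le_const[OF summableI])
  fix N
  have "(\<Sum>t<N. (if Ab B x t then 1 else 0) * ennreal (x t)) = (\<Sum>t<N. ennreal (if Ab B x t then x t else 0))"
    by (intro sum.cong) auto
  also have "\<dots> = ennreal (\<Sum>t<N. if Ab B x t then x t else 0)"
    by (rule sum_ennreal) (use x in auto)
  also have "\<dots> \<le> ennreal (B + K)"
    using PB_real[OF x B, where N=N] by (intro ennreal_leI) simp
  finally show "(\<Sum>t<N. (if Ab B x t then 1 else 0) * ennreal (x t)) \<le> ennreal (B + K)" .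
qed

lemma PL:
  assumes x: "\<And>t. 0 \<le> x t" and nA: "\<not> (\<forall>t. Ab B x t)"
  shows "ennreal B \<le> (\<Sum>t. (if Ab B x t then 1 else 0) * ennreal (x t))"
proof -
  obtain t0 where "\<not> Ab B x t0" using nA by blast
  then have ex: "\<exists>u. B - (\<Sum>v\<le>u. x v) < 0" unfolding Ab_def by (auto simp: not_le)
  define L where "L = (LEAST u. B - (\<Sum>v\<le>u. x v) < 0)"
  have L: "B - (\<Sum>v\<le>L. x v) < 0" unfolding L_def using ex by (metis LeastI)
  have AL: "Ab B x t" if "t \<le> L" for t
    unfolding Ab_def
  proof (intro allI impI)
    fix u assume "u < t"
    then have "u < L" using that by simp
    then have "\<not> (B - (\<Sum>v\<le>u. x v) < 0)" unfolding L_def by (rule not_less_Least)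
    then show "0 \<le> B - (\<Sum>v\<le>u. x v)" by simp
  qed
  have "ennreal B \<le> ennreal (\<Sum>v\<le>L. x v)" using L by (intro ennreal_leI) simp
  also have "\<dots> = (\<Sum>t\<le>L. ennreal (x t))" by (rule sum_ennreal[symmetric]) (use x in auto)
  also have "\<dots> = (\<Sum>t\<in>{..L}. (if Ab B x t then 1 else 0) * ennreal (x t))"
    by (intro sum.cong refl) (simp add: AL)
  also have "\<dots> \<le> (\<Sum>t. (if Ab B x t then 1 else 0) * ennreal (x t))"
    by (rule sum_le_suminf) auto
  finally show ?thesis .
qed

lemma PR:
  assumes r: "\<And>t. r t \<le> (1::ennreal)" and AS: "\<And>t. A t = (\<forall>u<t. P u)"
  shows "(\<Sum>t. (if A t then 1 else 0) * r t) \<le> (\<Sum>t. (if A (Suc t) then 1 else 0) * r t) + 1"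
proof -
  define L where "L = (LEAST u. \<not> P u)"
  have le: "(if A t then 1 else 0) * r t \<le> (if A (Suc t) then 1 else 0) * r t + (if t = L then 1 else 0)" for t
  proof (cases "A t")
    case True
    show ?thesis
    proof (cases "A (Suc t)")
      case True then show ?thesis by simp
    next
      case False
      have all: "\<forall>u<t. P u" using \<open>A t\<close> AS by simp
      have "\<not> P t" using False all AS[of "Suc t"] less_Suc_eq by auto
      then have "L \<le> t" unfolding L_def by (rule Least_le)
      moreover have "\<not> L < t"
      proof
        assume "L < t"
        then have "P L" using all by simp
        moreover have "\<not> P L" unfolding L_def using \<open>\<not> P t\<close> by (rule LeastI)
        ultimately show False by simp
      qed
      ultimately have "t = L" by simp
      then show ?thesis using False r[of t] by simp
    qed
  next
    case False then show ?thesis by simp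
  qed
  have "(\<Sum>t. (if A t then 1 else 0) * r t) \<le> (\<Sum>t. (if A (Suc t) then 1 else 0) * r t + (if t = L then 1 else 0))"
    by (intro suminf_le le summableI)
  also have "\<dots> = (\<Sum>t. (if A (Suc t) then 1 else 0) * r t) + (\<Sum>t. if t = L then 1 else 0 :: ennreal)"
    by (rule suminf_add[symmetric]) auto
  also have "(\<Sum>t. if t = L then 1 else 0 :: ennreal) = 1"
    using sums_single[of L "\<lambda>_. 1 :: ennreal"] by (simp add: sums_iff)
  finally show ?thesis .
qed


lemma At_Ab: "At B p t om = Ab B (\<lambda>v. round_cost p om v) t"
  unfolding At_def Ab_def budget_left_def ..

context setting begin

definition Ph :: "policy \<Rightarrow> nat \<Rightarrow> (nat \<Rightarrow> round) \<Rightarrow> ennreal" where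
  "Ph p t om = (if At B p t om then 1 else 0)"

lemma c0_ex: "\<exists>c0. c0 \<in> space CC"
proof -
  interpret C: prob_space CC by (rule pC)
  show ?thesis using C.not_empty by blast
qed

lemma KEY_app:
  fixes g :: "nat list \<Rightarrow> (nat \<Rightarrow> real) \<Rightarrow> nat \<Rightarrow> ennreal"
  assumes v: "valid p" and gm: "\<And>s. (\<lambda>(c, h). g s c h) \<in> borel_measurable (CC \<Otimes>\<^sub>M Hm)"
  shows "(\<integral>\<^sup>+om. Ph p t om * g (choice p om t) (fst (om t)) (fst (snd (om t))) \<partial>Mm)
       = (\<integral>\<^sup>+om. Ph p t om * (\<integral>\<^sup>+c. \<integral>\<^sup>+h. g (choice p om t) c h \<partial>Hm \<partial>CC) \<partial>Mm)"
proof -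
  obtain c0 where c0: "c0 \<in> space CC" using c0_ex by blast
  have h0: "(0::nat) \<in> space Hm" by simp
  have Phm: "Ph p t \<in> borel_measurable (PiM UNIV (\<lambda>_::nat. CC \<Otimes>\<^sub>M (Hm \<Otimes>\<^sub>M UU)))"
    using Ph_meas[OF v, of t] unfolding Mm_eq Ph_def[abs_def] by simp
  have Sgm: "(\<lambda>om. choice p om t) \<in> measurable (PiM UNIV (\<lambda>_::nat. CC \<Otimes>\<^sub>M (Hm \<Otimes>\<^sub>M UU))) (count_space UNIV)"
    using v unfolding valid_def Mm_eq by simp
  have inv1: "Ph p t (om(t := (c,h,u))) = Ph p t (om(t := (c',h',u)))" for om c h c' h' u
  proof -
    have "At B p t (om(t := a)) = At B p t om" for a by (rule At_cong) simp
    then show ?thesis unfolding Ph_def by simp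
  qed
  have inv2: "choice p (om(t := (c,h,u))) t = choice p (om(t := (c',h',u))) t" for om c h c' h' u
    by (rule choice_cong) auto
  show ?thesis
    unfolding Mm_eq
    by (rule KEY[OF pC pH pU Phm Sgm gm inv1 inv2 c0 h0])
qed

lemma K_rew: assumes v: "valid p" and sr: "\<forall>om\<in>space Mm. choice p om t \<in> searches n E"
  shows "(\<integral>\<^sup>+om. Ph p t om * ennreal (round_reward p om t) \<partial>Mm)
       = (\<integral>\<^sup>+om. Ph p t om * ennreal (Dw (choice p om t) wstar) \<partial>Mm)"
proof -
  have "(\<integral>\<^sup>+om. Ph p t om * ennreal (round_reward p om t) \<partial>Mm)
      = (\<integral>\<^sup>+om. Ph p t om * (\<lambda>s c h. ennreal (rewf s h)) (choice p om t) (fst (om t)) (fst (snd (om t))) \<partial>Mm)"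
    by (simp add: round_reward_eq)
  also have "\<dots> = (\<integral>\<^sup>+om. Ph p t om * (\<integral>\<^sup>+c. \<integral>\<^sup>+h. ennreal (rewf (choice p om t) h) \<partial>Hm \<partial>CC) \<partial>Mm)"
    by (rule KEY_app[OF v rewf_meas])
  also have "\<dots> = (\<integral>\<^sup>+om. Ph p t om * ennreal (Dw (choice p om t) wstar) \<partial>Mm)"
  proof (rule nn_integral_cong)
    fix om assume "om \<in> space Mm"
    then have "(\<integral>\<^sup>+c. \<integral>\<^sup>+h. ennreal (rewf (choice p om t) h) \<partial>Hm \<partial>CC) = ennreal (Dw (choice p om t) wstar)"
      using sr by (intro E_rew) blast
    then show "Ph p t om * (\<integral>\<^sup>+c. \<integral>\<^sup>+h. ennreal (rewf (choice p om t) h) \<partial>Hm \<partial>CC) = Ph p t om * ennreal (Dw (choice p om t) wstar)" by (simp only:)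
  qed
  finally show ?thesis .
qed

lemma K_cost: assumes v: "valid p" and sr: "\<forall>om\<in>space Mm. choice p om t \<in> searches n E"
  shows "(\<integral>\<^sup>+om. Ph p t om * ennreal (round_cost p om t) \<partial>Mm)
       = (\<integral>\<^sup>+om. Ph p t om * ennreal (Nm (choice p om t) wstar cstar) \<partial>Mm)"
proof -
  have "(\<integral>\<^sup>+om. Ph p t om * ennreal (round_cost p om t) \<partial>Mm)
      = (\<integral>\<^sup>+om. Ph p t om * (\<lambda>s c h. ennreal (costf s c h)) (choice p om t) (fst (om t)) (fst (snd (om t))) \<partial>Mm)"
    by (simp add: round_cost_eq)
  also have "\<dots> = (\<integral>\<^sup>+om. Ph p t om * (\<integral>\<^sup>+c. \<integral>\<^sup>+h. ennreal (costf (choice p om t) c h) \<partial>Hm \<partial>CC) \<partial>Mm)"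
    by (rule KEY_app[OF v costf_meas])
  also have "\<dots> = (\<integral>\<^sup>+om. Ph p t om * ennreal (Nm (choice p om t) wstar cstar) \<partial>Mm)"
  proof (rule nn_integral_cong)
    fix om assume "om \<in> space Mm"
    then have "(\<integral>\<^sup>+c. \<integral>\<^sup>+h. ennreal (costf (choice p om t) c h) \<partial>Hm \<partial>CC) = ennreal (Nm (choice p om t) wstar cstar)"
      using sr by (intro E_cost) blast
    then show "Ph p t om * (\<integral>\<^sup>+c. \<integral>\<^sup>+h. ennreal (costf (choice p om t) c h) \<partial>Hm \<partial>CC) = Ph p t om * ennreal (Nm (choice p om t) wstar cstar)" by (simp only:)
  qed
  finally show ?thesis .
qed


lemma AE_M: "AE om in Mm. \<forall>t. \<forall>i\<in>{1..n}. 0 \<le> fst (om t) i \<and> fst (om t) i \<le> 1"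
proof -
  interpret HU: prob_space "Hm \<Otimes>\<^sub>M UU" by (intro prob_space_pair pH pU)
  have D: "distr (CC \<Otimes>\<^sub>M (Hm \<Otimes>\<^sub>M UU)) CC fst = CC" by (rule HU.distr_pair_fst)
  have "AE x in distr (CC \<Otimes>\<^sub>M (Hm \<Otimes>\<^sub>M UU)) CC fst. \<forall>i\<in>{1..n}. 0 \<le> x i \<and> x i \<le> 1"
    unfolding D by (rule AE_C)
  then have R: "AE x in CC \<Otimes>\<^sub>M (Hm \<Otimes>\<^sub>M UU). (\<lambda>c. \<forall>i\<in>{1..n}. 0 \<le> c i \<and> c i \<le> 1) (fst x)"
    by (intro AE_distrD[OF measurable_fst]) simp
  have "AE om in Mm. (\<lambda>x. (\<lambda>c. \<forall>i\<in>{1..n}. 0 \<le> c i \<and> c i \<le> 1) (fst x)) (om t)" for t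
    unfolding Mm_eq by (rule AE_PiM_component[OF pR _ R]) simp
  then show ?thesis by (simp add: AE_all_countable)
qed

lemma length_le_n: "s \<in> searches n E \<Longrightarrow> length s \<le> n"
proof -
  assume s: "s \<in> searches n E"
  have d: "distinct s" and ss: "set s \<subseteq> {1..n}" using searchesD[OF s] by auto
  have "length s = card (set s)" using d by (simp add: distinct_card)
  also have "\<dots> \<le> card {1..n}" using ss by (intro card_mono) auto
  finally show ?thesis by simp
qed

lemma sumlist_bounds: "(\<And>x. x \<in> set L \<Longrightarrow> 0 \<le> c x \<and> c x \<le> 1) \<Longrightarrow>
   0 \<le> sum_list (map c L) \<and> sum_list (map c L) \<le> real (length L)"
  by (induction L) (auto, fastforce+)

lemma costf_bounds:
  assumes s: "s \<in> searches n E" and c: "\<forall>i\<in>{1..n}. 0 \<le> c i \<and> c i \<le> 1"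
  shows "0 \<le> costf s c h \<and> costf s c h \<le> real n"
proof -
  let ?L = "sprefix s (hider_vec h)"
  have "set ?L \<subseteq> {1..n}" using set_sprefix[of s "hider_vec h"] searchesD(2)[OF s] by (rule order_trans)
  then have "0 \<le> sum_list (map c ?L) \<and> sum_list (map c ?L) \<le> real (length ?L)"
    using c by (intro sumlist_bounds) blast
  moreover have "length ?L \<le> n" using length_sprefix[of s] length_le_n[OF s] by (rule order_trans)
  ultimately show ?thesis unfolding costf_def by simp
qed

lemma valid_policy_D: "valid_policy n E Mm p \<Longrightarrow> valid p \<and> (\<forall>om\<in>space Mm. \<forall>t. choice p om t \<in> searches n E)"
  unfolding valid_policy_def valid_def by blast

lemma Ph_At: "Ph p t om = (if Ab B (\<lambda>v. round_cost p om v) t then 1 else 0)"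
  unfolding Ph_def At_Ab ..

lemma upper:
  assumes v: "valid p" and sr: "\<forall>om\<in>space Mm. \<forall>t. choice p om t \<in> searches n E"
  shows "reward_expected Mm B p \<le> ennreal ((B + real n) / J)"
proof -
  have Jp: "0 < J" using facts by simp
  have Phm: "Ph p t \<in> borel_measurable Mm" for t using Ph_meas[OF v, of t] unfolding Ph_def[abs_def] .
  have rm: "(\<lambda>om. ennreal (round_reward p om t)) \<in> borel_measurable Mm" for t
    using measurable_compose[OF rew_meas[OF v] measurable_ennreal] by simp
  have cm: "(\<lambda>om. ennreal (round_cost p om t)) \<in> borel_measurable Mm" for t
    using measurable_compose[OF cost_meas[OF v] measurable_ennreal] by simp
  have chm: "(\<lambda>om. choice p om t) \<in> measurable Mm (count_space UNIV)" for t using v by (simp add: valid_def)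
  have Nmm: "(\<lambda>om. ennreal (Nm (choice p om t) wstar cstar)) \<in> borel_measurable Mm" for t
    by (rule measurable_compose_countable[OF _ chm]) simp
  have "reward_expected Mm B p = (\<integral>\<^sup>+om. (\<Sum>t. if enat t < stop_time B p om then ennreal (round_reward p om t) else 0) \<partial>Mm)"
    by (simp add: reward_expected_def)
  also have "\<dots> \<le> (\<integral>\<^sup>+om. (\<Sum>t. Ph p t om * ennreal (round_reward p om t)) \<partial>Mm)"
  proof (intro nn_integral_mono suminf_le summableI)
    fix om t
    show "(if enat t < stop_time B p om then ennreal (round_reward p om t) else 0) \<le> Ph p t om * ennreal (round_reward p om t)"
      using stop_At[of t B p om] At_Suc[of B p t om] by (simp add: Ph_def)
  qed
  also have "\<dots> = (\<Sum>t. \<integral>\<^sup>+om. Ph p t om * ennreal (round_reward p om t) \<partial>Mm)"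
    by (rule nn_integral_suminf) (intro borel_measurable_times_ennreal Phm rm)
  also have "\<dots> = (\<Sum>t. \<integral>\<^sup>+om. Ph p t om * ennreal (Dw (choice p om t) wstar) \<partial>Mm)"
    using K_rew[OF v] sr by simp
  also have "\<dots> \<le> (\<Sum>t. ennreal (1 / J) * \<integral>\<^sup>+om. Ph p t om * ennreal (Nm (choice p om t) wstar cstar) \<partial>Mm)"
  proof (intro suminf_le summableI)
    fix t
    have "(\<integral>\<^sup>+om. Ph p t om * ennreal (Dw (choice p om t) wstar) \<partial>Mm)
        \<le> (\<integral>\<^sup>+om. ennreal (1 / J) * (Ph p t om * ennreal (Nm (choice p om t) wstar cstar)) \<partial>Mm)"
    proof (intro nn_integral_mono)
      fix om assume om: "om \<in> space Mm"
      have s: "choice p om t \<in> searches n E" using sr om by blast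
      have "Dw (choice p om t) wstar \<le> (1 / J) * Nm (choice p om t) wstar cstar"
        using J_le_ratio[OF s] Jp by (simp add: field_simps)
      then have "ennreal (Dw (choice p om t) wstar) \<le> ennreal (1 / J) * ennreal (Nm (choice p om t) wstar cstar)"
      proof -
        have "ennreal (1 / J) * ennreal (Nm (choice p om t) wstar cstar) = ennreal (1 / J * Nm (choice p om t) wstar cstar)"
          using Jp Nm_nonneg[OF s] by (intro ennreal_mult[symmetric]) auto
        then show ?thesis using \<open>Dw (choice p om t) wstar \<le> (1 / J) * Nm (choice p om t) wstar cstar\<close>
          by (simp add: ennreal_leI)
      qed
      then show "Ph p t om * ennreal (Dw (choice p om t) wstar) \<le> ennreal (1 / J) * (Ph p t om * ennreal (Nm (choice p om t) wstar cstar))"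
        by (simp add: Ph_def)
    qed
    also have "\<dots> = ennreal (1 / J) * \<integral>\<^sup>+om. Ph p t om * ennreal (Nm (choice p om t) wstar cstar) \<partial>Mm"
      by (rule nn_integral_cmult) (intro borel_measurable_times_ennreal Phm Nmm)
    finally show "(\<integral>\<^sup>+om. Ph p t om * ennreal (Dw (choice p om t) wstar) \<partial>Mm)
        \<le> ennreal (1 / J) * \<integral>\<^sup>+om. Ph p t om * ennreal (Nm (choice p om t) wstar cstar) \<partial>Mm" .
  qed
  also have "\<dots> = ennreal (1 / J) * (\<Sum>t. \<integral>\<^sup>+om. Ph p t om * ennreal (round_cost p om t) \<partial>Mm)"
    using K_cost[OF v] sr by simp
  also have "(\<Sum>t. \<integral>\<^sup>+om. Ph p t om * ennreal (round_cost p om t) \<partial>Mm) = (\<integral>\<^sup>+om. (\<Sum>t. Ph p t om * ennreal (round_cost p om t)) \<partial>Mm)"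
    by (rule nn_integral_suminf[symmetric]) (intro borel_measurable_times_ennreal Phm cm)
  also have "\<dots> \<le> (\<integral>\<^sup>+om. ennreal (B + real n) \<partial>Mm)"
  proof (rule nn_integral_mono_AE)
    show "AE om in Mm. (\<Sum>t. Ph p t om * ennreal (round_cost p om t)) \<le> ennreal (B + real n)"
      using AE_M AE_space
    proof eventually_elim
      case (elim om)
      have x: "0 \<le> round_cost p om t \<and> round_cost p om t \<le> real n" for t
        unfolding round_cost_eq using costf_bounds[of "choice p om t" "fst (om t)"] sr elim by blast
      show ?case unfolding Ph_At using PB[OF x] Bpos by simp
    qed
  qed
  also have "\<dots> = ennreal (B + real n)"
    using prob_space.emeasure_space_1[OF pM] by simp
  finally have "reward_expected Mm B p \<le> ennreal (1 / J) * ennreal (B + real n)"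
    by (simp add: mult_left_mono)
  also have "\<dots> = ennreal ((B + real n) / J)"
  proof -
    have "ennreal (1 / J) * ennreal (B + real n) = ennreal (1 / J * (B + real n))"
      using Jp Bpos by (intro ennreal_mult[symmetric]) auto
    then show ?thesis by simp
  qed
  finally show ?thesis .
qed

end


lemma suminf_const_top: assumes "(e::ennreal) \<noteq> 0" shows "(\<Sum>t::nat. e) = top"
proof (rule ccontr)
  assume ne: "(\<Sum>t::nat. e) \<noteq> top"
  have "e \<le> (\<Sum>t::nat. e)" using sum_le_suminf[of "\<lambda>t::nat. e" "{0}"] by simp
  then have "e \<noteq> top" using ne top.extremum_unique by metis
  then obtain e' where e': "0 \<le> e'" "e = ennreal e'" by (cases e) auto
  then have "summable (\<lambda>t::nat. e')" using ne by (intro summable_suminf_not_top) auto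
  then have "(\<lambda>t::nat. e') \<longlonglongrightarrow> 0" by (rule summable_LIMSEQ_zero)
  then have "e' = 0" by (simp add: LIMSEQ_const_iff)
  then show False using assms e' by simp
qed

context setting begin

abbreviation "ps \<equiv> (\<lambda>_ _. sstar) :: policy"

lemma ch_ps[simp]: "choice ps om t = sstar" by (simp add: choice_def)

lemma valid_ps: "valid ps" by (simp add: valid_def)

lemma lower: "ereal ((B - real n) / J) \<le> enn2ereal (reward_expected Mm B ps)"
proof -
  have v: "valid ps" by (rule valid_ps)
  have sr: "\<forall>om\<in>space Mm. choice ps om t \<in> searches n E" for t using sstar by simp
  define p where "p = Dw sstar wstar"
  define N where "N = Nm sstar wstar cstar"
  have pp: "0 < p" using facts by (simp add: p_def)
  have Jeq: "J = N / p" using facts by (simp add: p_def N_def)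
  have Jp: "0 < J" "J \<le> real n" using facts by auto
  have "N = J * p" using Jeq pp by simp
  then have Np: "0 < N" using Jp pp by simp
  define P where "P t = (\<integral>\<^sup>+om. Ph ps t om \<partial>Mm)" for t
  define S where "S = (\<Sum>t. P t)"
  define F where "F = reward_expected Mm B ps"
  have Phm: "Ph ps t \<in> borel_measurable Mm" for t using Ph_meas[OF v, of t] unfolding Ph_def[abs_def] .
  have rm: "(\<lambda>om. ennreal (round_reward ps om t)) \<in> borel_measurable Mm" for t
    using measurable_compose[OF rew_meas[OF v] measurable_ennreal] by simp
  have cm: "(\<lambda>om. ennreal (round_cost ps om t)) \<in> borel_measurable Mm" for t
    using measurable_compose[OF cost_meas[OF v] measurable_ennreal] by simp
  have Kr: "(\<integral>\<^sup>+om. Ph ps t om * ennreal (round_reward ps om t) \<partial>Mm) = P t * ennreal p" for t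
    using K_rew[OF v sr] nn_integral_multc[OF Phm] by (simp add: P_def p_def)
  have Kc: "(\<integral>\<^sup>+om. Ph ps t om * ennreal (round_cost ps om t) \<partial>Mm) = P t * ennreal N" for t
    using K_cost[OF v sr] nn_integral_multc[OF Phm] by (simp add: P_def N_def)
  have sumr: "(\<integral>\<^sup>+om. (\<Sum>t. Ph ps t om * ennreal (round_reward ps om t)) \<partial>Mm) = S * ennreal p"
  proof -
    have "(\<integral>\<^sup>+om. (\<Sum>t. Ph ps t om * ennreal (round_reward ps om t)) \<partial>Mm) = (\<Sum>t. P t * ennreal p)"
      by (subst nn_integral_suminf) (intro borel_measurable_times_ennreal Phm rm, simp add: Kr)
    also have "\<dots> = S * ennreal p" unfolding S_def using ennreal_suminf_cmult[of "ennreal p" P] by (simp add: mult.commute)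
    finally show ?thesis .
  qed
  have sumc: "(\<integral>\<^sup>+om. (\<Sum>t. Ph ps t om * ennreal (round_cost ps om t)) \<partial>Mm) = S * ennreal N"
  proof -
    have "(\<integral>\<^sup>+om. (\<Sum>t. Ph ps t om * ennreal (round_cost ps om t)) \<partial>Mm) = (\<Sum>t. P t * ennreal N)"
      by (subst nn_integral_suminf) (intro borel_measurable_times_ennreal Phm cm, simp add: Kc)
    also have "\<dots> = S * ennreal N" unfolding S_def using ennreal_suminf_cmult[of "ennreal N" P] by (simp add: mult.commute)
    finally show ?thesis .
  qed
  have Fe: "F = (\<integral>\<^sup>+om. (\<Sum>t. Ph ps (Suc t) om * ennreal (round_reward ps om t)) \<partial>Mm)"
    unfolding F_def reward_expected_def
    by (intro nn_integral_cong suminf_cong) (simp add: stop_At Ph_def)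
  have SF: "S * ennreal p \<le> F + 1"
  proof -
    have "S * ennreal p \<le> (\<integral>\<^sup>+om. (\<Sum>t. Ph ps (Suc t) om * ennreal (round_reward ps om t)) + 1 \<partial>Mm)"
      unfolding sumr[symmetric]
    proof (rule nn_integral_mono)
      fix om
      have r1: "ennreal (round_reward ps om t) \<le> 1" for t
        by (simp add: round_reward_eq rewf_alt)
      show "(\<Sum>t. Ph ps t om * ennreal (round_reward ps om t)) \<le> (\<Sum>t. Ph ps (Suc t) om * ennreal (round_reward ps om t)) + 1"
        unfolding Ph_def
        by (rule PR[where P="\<lambda>u. 0 \<le> budget_left B ps om u", OF r1]) (simp add: At_def)
    qed
    also have "\<dots> = F + 1"
    proof -
      have m: "(\<lambda>om. \<Sum>t. Ph ps (Suc t) om * ennreal (round_reward ps om t)) \<in> borel_measurable Mm"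
        by (intro borel_measurable_suminf_order borel_measurable_times_ennreal Phm rm)
      show ?thesis unfolding Fe
        using prob_space.emeasure_space_1[OF pM] by (subst nn_integral_add[OF m]) auto
    qed
    finally show ?thesis .
  qed
  have SB: "S = top \<or> ennreal B \<le> S * ennreal N"
  proof -
    define Z where "Z = {om \<in> space Mm. \<forall>t. At B ps t om}"
    have Zs: "Z \<in> sets Mm" unfolding Z_def
      using At_sets[OF v] by (intro sets.sets_Collect_countable_All) auto
    show ?thesis
    proof (cases "emeasure Mm Z = 0")
      case True
      have AEZ: "AE om in Mm. \<not> (\<forall>t. At B ps t om)"
        by (rule AE_I'[of Z]) (use True Zs in \<open>auto simp: Z_def null_sets_def\<close>)
      have "ennreal B = (\<integral>\<^sup>+om. ennreal B \<partial>Mm)"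
        using prob_space.emeasure_space_1[OF pM] by simp
      also have "\<dots> \<le> (\<integral>\<^sup>+om. (\<Sum>t. Ph ps t om * ennreal (round_cost ps om t)) \<partial>Mm)"
      proof (rule nn_integral_mono_AE)
        show "AE om in Mm. ennreal B \<le> (\<Sum>t. Ph ps t om * ennreal (round_cost ps om t))"
          using AE_M AEZ
        proof eventually_elim
          case (elim om)
          have x: "0 \<le> round_cost ps om t" for t
            unfolding round_cost_eq using costf_bounds[of sstar "fst (om t)"] sstar elim by simp
          have nA: "\<not> (\<forall>t. Ab B (\<lambda>v. round_cost ps om v) t)" using elim by (simp add: At_Ab)
          show ?case unfolding Ph_At using PL[OF x nA] .
        qed
      qed
      also have "\<dots> = S * ennreal N" by (rule sumc)
      finally show ?thesis by simp
    next
      case False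
      have "emeasure Mm Z \<le> P t" for t
      proof -
        have "emeasure Mm Z = (\<integral>\<^sup>+om. indicator Z om \<partial>Mm)" using Zs by simp
        also have "\<dots> \<le> P t" unfolding P_def
          by (intro nn_integral_mono) (auto simp: Z_def Ph_def indicator_def)
        finally show ?thesis .
      qed
      then have "(\<Sum>t::nat. emeasure Mm Z) \<le> S" unfolding S_def by (intro suminf_le summableI)
      then show ?thesis using suminf_const_top[OF False] by (simp add: top_unique)
    qed
  qed
  show ?thesis
  proof (cases F)
    case top
    then show ?thesis by (simp add: F_def)
  next
    case (real f)
    have Sfin: "S \<noteq> top"
    proof
      assume "S = top"
      then have "S * ennreal p = top" using pp by simp
      then show False using SF real by (simp add: top_unique)
    qed
    then obtain s0 where s0: "0 \<le> s0" "S = ennreal s0" by (cases S) auto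
    have "ennreal (s0 * p) \<le> ennreal (f + 1)"
      using SF s0 real pp by (simp add: ennreal_mult[symmetric] ennreal_plus[symmetric])
    moreover have "ennreal (f + 1) = ennreal f + 1" using real(1) by (simp add: ennreal_plus)
    ultimately have "ennreal (s0 * p) \<le> ennreal (f + 1)" by simp
    then have sp: "s0 * p \<le> f + 1" using real(1) by (subst (asm) ennreal_le_iff) auto
    have "ennreal B \<le> ennreal (s0 * N)" using SB Sfin s0 Np by (simp add: ennreal_mult[symmetric])
    then have bs: "B \<le> s0 * N" using s0 Np by (simp add: ennreal_le_iff)
    have "B / J \<le> s0 * p"
    proof -
      have "B / J = B * p / N" using Jeq by simp
      also have "\<dots> \<le> s0 * N * p / N" using bs pp Np by (intro divide_right_mono mult_right_mono) auto
      also have "\<dots> = s0 * p" using Np by simp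
      finally show ?thesis .
    qed
    moreover have "1 \<le> real n / J" using Jp by simp
    moreover have "(B - real n) / J = B / J - real n / J" by (simp add: diff_divide_distrib)
    ultimately have "(B - real n) / J \<le> f" using sp by linarith
    then show ?thesis using real by (simp add: F_def)
  qed
qed

end

theorem proposition1:
  fixes n :: nat and E :: "(nat \<times> nat) set"
    and wstar cstar :: "nat \<Rightarrow> real" and \<mu> :: "nat \<Rightarrow> real measure" and H :: "nat pmf"
    and B :: real and sstar :: "nat list"
  assumes "E \<subseteq> {1..n} \<times> {1..n}" and "acyclic E"
    and "\<forall>i\<in>{1..n}. 0 \<le> wstar i \<and> wstar i \<le> 1" and "(\<Sum>i\<in>{1..n}. wstar i) = 1"
    and "\<forall>i\<in>{1..n}. pmf H i = wstar i"
    and "\<forall>i\<in>{1..n}. prob_space (\<mu> i) \<and> sets (\<mu> i) = sets borel \<and>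
           emeasure (\<mu> i) {0..1} = 1 \<and> (\<integral>x. x \<partial>(\<mu> i)) = cstar i"
    and "\<forall>i\<in>{1..n}. 0 < cstar i \<and> cstar i \<le> 1"
    and "sstar \<in> searches n E" and "Jfun sstar wstar cstar = Jstar n E wstar cstar"
    and "B > 0"
  shows "ereal ((B - real n) / real_of_ereal (Jstar n E wstar cstar))
           \<le> enn2ereal (reward_expected (omega_measure n \<mu> H) B (\<lambda>_ _. sstar))
       \<and> reward_expected (omega_measure n \<mu> H) B (\<lambda>_ _. sstar)
           \<le> opt_reward n E (omega_measure n \<mu> H) B
       \<and> enn2ereal (opt_reward n E (omega_measure n \<mu> H) B)
           \<le> ereal ((B + real n) / real_of_ereal (Jstar n E wstar cstar))"
proof -
  interpret S: setting n E wstar cstar \<mu> H B sstar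
    using assms by unfold_locales
  have J: "real_of_ereal (Jstar n E wstar cstar) = S.J" by (simp add: S.J_def)
  have vp: "valid_policy n E (omega_measure n \<mu> H) (\<lambda>_ _. sstar)"
    unfolding valid_policy_def using assms(8) by (simp add: choice_def)
  have c2: "reward_expected (omega_measure n \<mu> H) B (\<lambda>_ _. sstar) \<le> opt_reward n E (omega_measure n \<mu> H) B"
    unfolding opt_reward_def using vp by (intro SUP_upper) simp
  have "opt_reward n E (omega_measure n \<mu> H) B \<le> ennreal ((B + real n) / S.J)"
    unfolding opt_reward_def
  proof (rule SUP_least)
    fix p assume "p \<in> {p. valid_policy n E (omega_measure n \<mu> H) p}"
    then have "S.valid p \<and> (\<forall>om\<in>space (omega_measure n \<mu> H). \<forall>t. choice p om t \<in> searches n E)"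
      by (intro S.valid_policy_D) simp
    then show "reward_expected (omega_measure n \<mu> H) B p \<le> ennreal ((B + real n) / S.J)"
      using S.upper by blast
  qed
  then have c3: "enn2ereal (opt_reward n E (omega_measure n \<mu> H) B) \<le> ereal ((B + real n) / S.J)"
  proof -
    assume h: "opt_reward n E (omega_measure n \<mu> H) B \<le> ennreal ((B + real n) / S.J)"
    have "0 < S.J" using S.facts(3) .
    then have "0 \<le> (B + real n) / S.J" using assms(10) by (intro divide_nonneg_pos) auto
    then show ?thesis using h by (simp add: less_eq_ennreal.rep_eq)
  qed
  show ?thesis unfolding J using S.lower c2 c3 by simp
qed


end
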